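(* Let $\Lambda\subset\mathbb Z$ be a finite interval, $X,Y\subset\Lambda$ subintervals with $\operatorname{dist}(X,Y)\ge20$, $R\in\mathcal R_\Lambda$ a root tiling, $\lambda\in\mathbb C\setminus\{0\}$ and $\kappa>0$. Then for all even observables $A_1\in\mathcal A^e_X$, $A_2\in\mathcal A^e_Y$, $$\big|\omega^\Lambda_R(A_1A_2)-\omega^\Lambda_R(A_1)\,\omega^\Lambda_R(A_2)\big|\le8\|A_1\|\|A_2\|\,e^{-c(\lambda)(\operatorname{dist}(X,Y)-20)/2},$$ where $c(\lambda)=\frac13\ln\frac{\sqrt{4|\lambda|^2+1}+1}{\sqrt{4|\lambda|^2+1}-1}$. Moreover, for every odd observable $A_1\in\mathcal A^o_X$ and every observable $A_2\in\mathcal A_Y$, $\omega^\Lambda_R(A_1A_2)=\omega^\Lambda_R(A_1)=0$.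
   Context: Let $\Lambda=[a,b]$ and $\mathcal F_\Lambda$ be the fermionic Fock space over $\ell^2(\Lambda)$ with CAR operators $c_x,c_x^*$ and vacuum $|\emptyset\rangle$. For $X\subset\Lambda$, $\mathcal A_X$ is the algebra generated by $c_x,c_x^*$, $x\in X$; $\mathcal A^e_X$ ($\mathcal A^o_X$) is the subspace spanned by even (odd) monomials in these operators. Tilings: a tile occupies consecutive sites and carries a 0/1 word (its particle content): void $0$; monomer $100$; dimer $011000$; left boundary dimer $11000$ (allowed only as the first tile of $\Lambda$); and, allowed only as the last tile of $\Lambda$: right dimer $011$, right 1-monomer $1$, right 2-monomer $10$, truncated 1-dimer $0110$, truncated 2-dimer $01100$. A root tiling $R$ of $\Lambda$ is a tiling of $\Lambda$ by consecutive tiles consisting of voids and monomers, optionally with a left boundary dimer as first tile and optionally with one of right dimer, right 1-monomer, right 2-monomer as last tile; $\mathcal R_\Lambda$ is the set of root tilings. A VMD tiling derived from $R$ is obtained by choosing a collection of disjoint pairs of consecutive tiles of $R$, each pair being either two monomers (replaced by a dimer) or a monomer followed by a right $j$-monomer, $j\in\{1,2\}$ (replaced by the truncated $j$-dimer); $\mathcal D_\Lambda(R)$ is the set of all such tilings (including $R$ itself). For a tile $D$ let $C_D^*$ be the product of $c_x^*$ over the sites $x$ of $D$ carrying a $1$, in increasing order of $x$ (and $C_D^*=1$ for a void), multiplied by $\lambda$ if $D$ is a dimer, left/right boundary dimer or truncated dimer. The fermionic VMD state is $\psi_\Lambda(R)=\sum_{(D_1,\dots,D_N)\in\mathcal D_\Lambda(R)}C_{D_1}^*\cdots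 C_{D_N}^*|\emptyset\rangle$ (tiles listed left to right), and $\omega^\Lambda_R(A)=\langle\psi_\Lambda(R),A\psi_\Lambda(R)\rangle/\|\psi_\Lambda(R)\|^2$. *)

theory Defs
  imports Complex_Main
begin

text \<open>A vector of the Fock space F_Lambda is represented by its coefficients in the
occupation-number basis |S>, S a subset of Lambda; we use functions on all sets of
integers but only the values on Pow Lambda are ever used (inner products and norms
sum over Pow Lambda).\<close>

type_synonym fvec = "int set \<Rightarrow> complex"
type_synonym fop = "fvec \<Rightarrow> fvec"

definition jw_sign :: "int set \<Rightarrow> int \<Rightarrow> complex" where
  "jw_sign S x = (-1) ^ card {y \<in> S. y < x}"

definition cre :: "int \<Rightarrow> fop" where
  "cre x \<psi> = (\<lambda>S. if x \<in> S then jw_sign S x * \<psi> (S - {x}) else 0)"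

definition ann :: "int \<Rightarrow> fop" where
  "ann x \<psi> = (\<lambda>S. if x \<notin> S then jw_sign S x * \<psi> (insert x S) else 0)"

definition vac :: fvec where
  "vac = (\<lambda>S. if S = {} then 1 else 0)"

definition finner :: "int set \<Rightarrow> fvec \<Rightarrow> fvec \<Rightarrow> complex" where
  "finner \<Lambda> \<phi> \<psi> = (\<Sum>S\<in>Pow \<Lambda>. cnj (\<phi> S) * \<psi> S)"

definition fnorm :: "int set \<Rightarrow> fvec \<Rightarrow> real" where
  "fnorm \<Lambda> \<psi> = sqrt (\<Sum>S\<in>Pow \<Lambda>. (cmod (\<psi> S))\<^sup>2)"

definition opnorm :: "int set \<Rightarrow> fop \<Rightarrow> real" where
  "opnorm \<Lambda> A = Sup ((\<lambda>\<psi>. fnorm \<Lambda> (A \<psi>)) ` {\<psi>. fnorm \<Lambda> \<psi> \<le> 1})"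

text \<open>A monomial is a word of letters (True, x) = c_x^*, (False, x) = c_x; the word is
the operator product read left to right.\<close>
fun op_word :: "(bool \<times> int) list \<Rightarrow> fop" where
  "op_word [] = id"
| "op_word ((b, x) # w) = (if b then cre x else ann x) \<circ> op_word w"

definition op_span :: "((bool \<times> int) list \<Rightarrow> bool) \<Rightarrow> fop set" where
  "op_span P = {A. \<exists>(n::nat) (coef :: nat \<Rightarrow> complex) ws.
      (\<forall>i<n. P (ws i)) \<and> A = (\<lambda>\<psi> S. \<Sum>i<n. coef i * op_word (ws i) \<psi> S)}"

definition word_in :: "int set \<Rightarrow> (bool \<times> int) list \<Rightarrow> bool" where
  "word_in X w \<longleftrightarrow> (\<forall>p\<in>set w. snd p \<in> X)"

definition obs_alg :: "int set \<Rightarrow> fop set" where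
  "obs_alg X = op_span (word_in X)"

definition obs_even :: "int set \<Rightarrow> fop set" where
  "obs_even X = op_span (\<lambda>w. word_in X w \<and> even (length w))"

definition obs_odd :: "int set \<Rightarrow> fop set" where
  "obs_odd X = op_span (\<lambda>w. word_in X w \<and> odd (length w))"

datatype tile = Void | Mono | Dimer | LDimer | RDimer | RMono1 | RMono2 | TDimer1 | TDimer2

text \<open>Particle content (True = 1, False = 0).\<close>
fun tword :: "tile \<Rightarrow> bool list" where
  "tword Void = [False]"
| "tword Mono = [True, False, False]"
| "tword Dimer = [False, True, True, False, False, False]"
| "tword LDimer = [True, True, False, False, False]"
| "tword RDimer = [False, True, True]"
| "tword RMono1 = [True]"
| "tword RMono2 = [True, False]"
| "tword TDimer1 = [False, True, True, False]"
| "tword TDimer2 = [False, True, True, False, False]"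

definition tlen :: "tile \<Rightarrow> nat" where
  "tlen t = length (tword t)"

text \<open>Root tilings of [a,b]: tiles listed left to right.\<close>
definition root_tiling :: "int \<Rightarrow> int \<Rightarrow> tile list \<Rightarrow> bool" where
  "root_tiling a b R \<longleftrightarrow>
     int (sum_list (map tlen R)) = b - a + 1 \<and>
     (\<forall>i<length R. R ! i \<in> {Void, Mono}
        \<or> (i = 0 \<and> R ! i = LDimer)
        \<or> (i = length R - 1 \<and> R ! i \<in> {RDimer, RMono1, RMono2}))"

fun derived :: "tile list \<Rightarrow> tile list set" where
  "derived [] = {[]}"
| "derived [t] = {[t]}"
| "derived (t1 # t2 # ts) =
     (Cons t1 ` derived (t2 # ts)) \<union>
     (if t1 = Mono \<and> t2 = Mono then Cons Dimer ` derived ts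
      else if t1 = Mono \<and> t2 = RMono1 then Cons TDimer1 ` derived ts
      else if t1 = Mono \<and> t2 = RMono2 then Cons TDimer2 ` derived ts
      else {})"

definition tile_weight :: "complex \<Rightarrow> tile \<Rightarrow> complex" where
  "tile_weight lam t = (if t \<in> {Dimer, LDimer, RDimer, TDimer1, TDimer2} then lam else 1)"

fun cre_word :: "int \<Rightarrow> bool list \<Rightarrow> fop" where
  "cre_word p [] = id"
| "cre_word p (True # w) = cre p \<circ> cre_word (p + 1) w"
| "cre_word p (False # w) = cre_word (p + 1) w"

fun tiles_op :: "complex \<Rightarrow> int \<Rightarrow> tile list \<Rightarrow> fop" where
  "tiles_op lam p [] = id"
| "tiles_op lam p (t # ts) =
     (\<lambda>\<psi> S. tile_weight lam t * (cre_word p (tword t) \<circ> tiles_op lam (p + int (tlen t)) ts) \<psi> S)"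

definition vmd_state :: "complex \<Rightarrow> int \<Rightarrow> tile list \<Rightarrow> fvec" where
  "vmd_state lam a R = (\<lambda>S. \<Sum>D\<in>derived R. tiles_op lam a D vac S)"

definition omega :: "complex \<Rightarrow> int \<Rightarrow> int \<Rightarrow> tile list \<Rightarrow> fop \<Rightarrow> complex" where
  "omega lam a b R A =
     finner {a..b} (vmd_state lam a R) (A (vmd_state lam a R)) /
     finner {a..b} (vmd_state lam a R) (vmd_state lam a R)"

definition corr_rate :: "complex \<Rightarrow> real" where
  "corr_rate lam = (1/3) * ln ((sqrt (4 * (cmod lam)\<^sup>2 + 1) + 1) / (sqrt (4 * (cmod lam)\<^sup>2 + 1) - 1))"

definition set_dist :: "int set \<Rightarrow> int set \<Rightarrow> int" where
  "set_dist X Y = Min {\<bar>x - y\<bar> | x y. x \<in> X \<and> y \<in> Y}"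

end

theory Submission
  imports Defs "HOL-Analysis.Convex"
begin

datatype tst = SF | SR | SL

lemma UNIV_tst: "(UNIV :: tst set) = {SF, SR, SL}"
  using tst.exhaust by auto

instance tst :: finite
  by standard (simp add: UNIV_tst)

fun ones :: "int \<Rightarrow> bool list \<Rightarrow> int set" where
  "ones p [] = {}"
| "ones p (x # w) = (if x then insert p (ones (p + 1) w) else ones (p + 1) w)"

lemma ones_range: "y \<in> ones p w \<Longrightarrow> p \<le> y \<and> y < p + int (length w)"
proof (induction w arbitrary: p)
  case Nil
  then show ?case by simp
next
  case (Cons x w)
  show ?case
  proof (cases "y = p")
    case True
    then show ?thesis by simp
  next
    case False
    then have "y \<in> ones (p + 1) w" using Cons.prems by (simp split: if_splits)
    from Cons.IH[OF this] show ?thesis by simp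
  qed
qed

lemma finite_ones: "finite (ones p w)"
  by (induction w arbitrary: p) auto

lemma cre_word_ind:
  assumes "\<forall>y\<in>U. p + int (length w) \<le> y"
  shows "cre_word p w (\<lambda>S. if S = U then c else 0) = (\<lambda>S. if S = ones p w \<union> U then c else 0)"
  using assms
proof (induction w arbitrary: p)
  case Nil
  then show ?case by simp
next
  case (Cons x w)
  have IH: "cre_word (p + 1) w (\<lambda>S. if S = U then c else 0) = (\<lambda>S. if S = ones (p + 1) w \<union> U then c else 0)"
    using Cons.prems by (intro Cons.IH) auto
  show ?case
  proof (cases x)
    case True
    define V where "V = ones (p + 1) w \<union> U"
    have Vgt: "\<forall>y\<in>V. p < y" using Cons.prems ones_range[of _ "p+1" w] unfolding V_def by force
    have pV: "p \<notin> V" using Vgt by auto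
    have sgn: "jw_sign (insert p V) p = 1"
    proof -
      have "{y \<in> insert p V. y < p} = {}" using Vgt by auto
      then show ?thesis unfolding jw_sign_def by (simp only: card.empty power_0)
    qed
    have "cre p (\<lambda>S. if S = V then c else 0) = (\<lambda>S. if S = insert p V then c else 0)"
    proof
      fix S
      show "cre p (\<lambda>S. if S = V then c else 0) S = (if S = insert p V then c else 0)"
      proof (cases "S = insert p V")
        case True
        then show ?thesis using pV sgn unfolding cre_def by auto
      next
        case False
        then have "\<not> (p \<in> S \<and> S - {p} = V)" by auto
        then show ?thesis using False unfolding cre_def by auto
      qed
    qed
    then show ?thesis using True IH unfolding V_def by simp
  next
    case False
    then show ?thesis using IH by simp
  qed
qed

definition mergeable :: "tile \<Rightarrow> tile \<Rightarrow> bool" where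
  "mergeable t1 t2 \<longleftrightarrow> t1 = Mono \<and> t2 \<in> {Mono, RMono1, RMono2}"

fun vR :: "bool \<Rightarrow> tile list \<Rightarrow> tst list \<Rightarrow> bool" where
  "vR e [] [] = (\<not> e)"
| "vR e (t # ts) (SF # ss) = vR e ts ss"
| "vR e [t] [SR] = (e \<and> t = Mono)"
| "vR e (t1 # t2 # ts) (SR # SL # ss) = (mergeable t1 t2 \<and> vR e ts ss)"
| "vR _ _ _ = False"

definition vLR :: "bool \<Rightarrow> bool \<Rightarrow> tile list \<Rightarrow> tst list \<Rightarrow> bool" where
  "vLR eL eR R ss = (if eL then (\<exists>t ts ss'. R = t # ts \<and> ss = SL # ss' \<and> t \<in> {Mono, RMono1, RMono2} \<and> vR eR ts ss')
                     else vR eR R ss)"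

fun mg :: "tile \<Rightarrow> tile" where
  "mg Mono = Dimer"
| "mg RMono1 = TDimer1"
| "mg RMono2 = TDimer2"
| "mg _ = Void"

fun toD :: "tile list \<Rightarrow> tst list \<Rightarrow> tile list" where
  "toD (t # ts) (SF # ss) = t # toD ts ss"
| "toD (t1 # t2 # ts) (SR # SL # ss) = mg t2 # toD ts ss"
| "toD _ _ = []"

fun pat :: "int \<Rightarrow> tile \<Rightarrow> tst \<Rightarrow> int set" where
  "pat p t SF = ones p (tword t)"
| "pat p t SR = {p + 1, p + 2}"
| "pat p t SL = {}"

fun cfgS :: "int \<Rightarrow> tile list \<Rightarrow> tst list \<Rightarrow> int set" where
  "cfgS p (t # ts) (s # ss) = pat p t s \<union> cfgS (p + int (tlen t)) ts ss"
| "cfgS p _ _ = {}"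

definition tw :: "complex \<Rightarrow> tile \<Rightarrow> tst \<Rightarrow> complex" where
  "tw lam t s = (if s = SR then lam else if s = SF then tile_weight lam t else 1)"

fun wS :: "complex \<Rightarrow> tile list \<Rightarrow> tst list \<Rightarrow> complex" where
  "wS lam (t # ts) (s # ss) = tw lam t s * wS lam ts ss"
| "wS lam _ _ = 1"

lemma vR_length: "vR e R ss \<Longrightarrow> length ss = length R"
  by (induction e R ss rule: vR.induct) auto

lemma vR_nil: "vR e [] ss \<longleftrightarrow> ss = [] \<and> \<not> e"
  by (cases ss) auto

lemma vR_single: "vR e [t] ss \<longleftrightarrow> (ss = [SF] \<and> \<not> e) \<or> (ss = [SR] \<and> e \<and> t = Mono)"
  apply (cases ss)
   apply simp
  subgoal for s ss'
    by (cases s; cases ss') (auto simp: vR_nil)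
  done

lemma vR_cons2: "vR e (t1 # t2 # ts) ss \<longleftrightarrow>
   (\<exists>ss'. ss = SF # ss' \<and> vR e (t2 # ts) ss') \<or> (\<exists>ss'. ss = SR # SL # ss' \<and> mergeable t1 t2 \<and> vR e ts ss')"
  apply (cases ss)
   apply simp
  subgoal for s ss'
    apply (cases s)
      apply simp
     apply (cases ss')
      apply simp
    subgoal for s2 ss2 by (cases s2) auto
    apply simp
    done
  done

definition VS :: "tile list \<Rightarrow> tst list set" where
  "VS R = {ss. vR False R ss}"

lemma derived_eq: "derived R = toD R ` VS R"
proof (induction R rule: derived.induct)
  case 1
  then show ?case by (simp add: VS_def vR_nil)
next
  case (2 t)
  have "VS [t] = {[SF]}" by (auto simp: VS_def vR_single)
  then show ?case by simp
next
  case (3 t1 t2 ts)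
  have V: "VS (t1 # t2 # ts) = Cons SF ` VS (t2 # ts) \<union> (if mergeable t1 t2 then (\<lambda>ss. SR # SL # ss) ` VS ts else {})"
    by (auto simp: VS_def vR_cons2)
  have A: "toD (t1 # t2 # ts) ` (Cons SF ` VS (t2 # ts)) = Cons t1 ` derived (t2 # ts)"
    using 3(1) by (simp add: image_image)
  have B: "mergeable t1 t2 \<Longrightarrow> toD (t1 # t2 # ts) ` ((\<lambda>ss. SR # SL # ss) ` VS ts) = Cons (mg t2) ` derived ts"
    using 3 by (auto simp: image_image mergeable_def)
  show ?case
    unfolding V image_Un A
    using B by (cases t1; cases t2) (auto simp: mergeable_def)
qed

lemma toD_inj_aux: "vR False R ss \<Longrightarrow> vR False R ss' \<Longrightarrow> toD R ss = toD R ss' \<Longrightarrow> ss = ss'"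
proof (induction R arbitrary: ss ss' rule: induct_list012)
  case 1
  then show ?case by (simp add: vR_nil)
next
  case (2 x)
  then show ?case by (auto simp: vR_single)
next
  case (3 x y zs)
  from 3(3) 3(4) 3(5) show ?case
    unfolding vR_cons2
  proof (elim disjE exE conjE)
    fix s1 s2 assume "ss = SF # s1" "vR False (y # zs) s1" "ss' = SF # s2" "vR False (y # zs) s2"
      "toD (x # y # zs) ss = toD (x # y # zs) ss'"
    then show "ss = ss'" using 3(2) by auto
  next
    fix s1 s2 assume "ss = SR # SL # s1" "vR False zs s1" "ss' = SR # SL # s2" "vR False zs s2"
      "toD (x # y # zs) ss = toD (x # y # zs) ss'"
    then show "ss = ss'" using 3(1) by auto
  next
    fix s1 s2 assume "ss = SF # s1" "ss' = SR # SL # s2" "mergeable x y"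
      "toD (x # y # zs) ss = toD (x # y # zs) ss'"
    then show "ss = ss'" by (cases y) (auto simp: mergeable_def)
  next
    fix s1 s2 assume "ss' = SF # s1" "ss = SR # SL # s2" "mergeable x y"
      "toD (x # y # zs) ss = toD (x # y # zs) ss'"
    then show "ss = ss'" by (cases y) (auto simp: mergeable_def)
  qed
qed

lemma toD_inj: "inj_on (toD R) (VS R)"
  using toD_inj_aux unfolding inj_on_def VS_def by blast

definition tl_len :: "tile list \<Rightarrow> int" where
  "tl_len R = int (sum_list (map tlen R))"

lemma cfgS_range: "vR e R ss \<Longrightarrow> y \<in> cfgS p R ss \<Longrightarrow> p \<le> y \<and> y < p + tl_len R"
proof (induction e R ss arbitrary: p rule: vR.induct)
  case (2 e t ts ss)
  from 2(3) have "y \<in> ones p (tword t) \<or> y \<in> cfgS (p + int (tlen t)) ts ss" by simp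
  then show ?case
  proof
    assume "y \<in> ones p (tword t)"
    then show ?thesis using ones_range[of y p "tword t"] by (auto simp: tl_len_def tlen_def)
  next
    assume "y \<in> cfgS (p + int (tlen t)) ts ss"
    have "vR e ts ss" using 2(2) by simp
    from 2(1)[OF this \<open>y \<in> cfgS (p + int (tlen t)) ts ss\<close>] show ?thesis by (auto simp: tl_len_def)
  qed
next
  case (3 e t)
  then show ?case by (auto simp: tl_len_def tlen_def)
next
  case (4 e t1 t2 ts ss)
  have v: "mergeable t1 t2" "vR e ts ss" using 4(2) by auto
  have "tlen t1 = 3" using v by (simp add: mergeable_def tlen_def)
  have "y \<in> {p + 1, p + 2} \<or> y \<in> cfgS (p + 3 + int (tlen t2)) ts ss" using 4(3) \<open>tlen t1 = 3\<close> by (simp add: add.assoc)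
  then show ?case
  proof
    assume "y \<in> {p + 1, p + 2}"
    then show ?thesis using \<open>tlen t1 = 3\<close> by (auto simp: tl_len_def)
  next
    assume "y \<in> cfgS (p + 3 + int (tlen t2)) ts ss"
    from 4(1)[OF v(2) this] \<open>tlen t1 = 3\<close> show ?thesis by (auto simp: tl_len_def)
  qed
qed auto

lemma tiles_op_toD:
  "vR e R ss \<Longrightarrow> \<not> e \<Longrightarrow> tiles_op lam p (toD R ss) vac = (\<lambda>S. if S = cfgS p R ss then wS lam R ss else 0)"
proof (induction e R ss arbitrary: p rule: vR.induct)
  case (1 e)
  then show ?case by (auto simp: vac_def)
next
  case (2 e t ts ss)
  have IH: "tiles_op lam (p + int (tlen t)) (toD ts ss) vac = (\<lambda>S. if S = cfgS (p + int (tlen t)) ts ss then wS lam ts ss else 0)"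
    using 2 by simp
  have rng: "\<forall>y\<in>cfgS (p + int (tlen t)) ts ss. p + int (length (tword t)) \<le> y"
    using cfgS_range[of e ts ss _ "p + int (tlen t)"] 2(2) by (simp add: tlen_def)
  show ?case
    by (rule ext) (simp add: IH cre_word_ind[OF rng] tw_def)
next
  case (4 e t1 t2 ts ss)
  have m: "t1 = Mono" "t2 \<in> {Mono, RMono1, RMono2}" using 4(2) by (auto simp: mergeable_def)
  have IH: "tiles_op lam (p + int (tlen (mg t2))) (toD ts ss) vac = (\<lambda>S. if S = cfgS (p + int (tlen (mg t2))) ts ss then wS lam ts ss else 0)"
    using 4 by simp
  have len: "int (tlen (mg t2)) = 3 + int (tlen t2)" using m by (auto simp: tlen_def)
  have rng: "\<forall>y\<in>cfgS (p + int (tlen (mg t2))) ts ss. p + int (length (tword (mg t2))) \<le> y"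
    using cfgS_range[of e ts ss _ "p + int (tlen (mg t2))"] 4(2) by (simp add: tlen_def)
  have ow: "ones p (tword (mg t2)) = {p + 1, p + 2}" "tile_weight lam (mg t2) = lam"
    using m by (auto simp: tile_weight_def)
  have e: "p + int (tlen t1) + int (tlen t2) = p + int (tlen (mg t2))" using len m by (simp add: tlen_def)
  have c: "cfgS p (t1 # t2 # ts) (SR # SL # ss) = {p + 1, p + 2} \<union> cfgS (p + int (tlen (mg t2))) ts ss"
    by (simp add: e[symmetric])
  show ?case
    by (rule ext) (simp add: IH cre_word_ind[OF rng] tw_def ow e)
qed auto

lemma vmd_state_eq: "vmd_state lam a R = (\<lambda>S. \<Sum>ss\<in>VS R. if S = cfgS a R ss then wS lam R ss else 0)"
proof (rule ext)
  fix S
  have "vmd_state lam a R S = (\<Sum>D\<in>toD R ` VS R. tiles_op lam a D vac S)"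
    unfolding vmd_state_def derived_eq ..
  also have "\<dots> = (\<Sum>ss\<in>VS R. tiles_op lam a (toD R ss) vac S)"
    by (rule sum.reindex[OF toD_inj, unfolded comp_def])
  also have "\<dots> = (\<Sum>ss\<in>VS R. if S = cfgS a R ss then wS lam R ss else 0)"
    by (rule sum.cong) (auto simp: tiles_op_toD VS_def)
  finally show "vmd_state lam a R S = \<dots>" .
qed


lemma vR_Cons_SF: "vR e (t # ts) (SF # ss) = vR e ts ss" by simp

lemma vR_append:
  assumes "length s1 = length xs" "ys \<noteq> []"
  shows "vR e (xs @ ys) (s1 @ s2) \<longleftrightarrow> (\<exists>e'. vR e' xs s1 \<and> vLR e' e ys s2)"
  using assms
proof (induction xs arbitrary: s1 rule: induct_list012)
  case 1
  then show ?case by (auto simp: vLR_def)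
next
  case (2 x)
  then obtain s where s1: "s1 = [s]" by (cases s1) auto
  obtain y ys' where ys: "ys = y # ys'" using 2 by (cases ys) auto
  show ?case
  proof (cases s)
    case SF
    then show ?thesis using s1 ys by (auto simp: vLR_def vR_single)
  next
    case SR
    show ?thesis
      unfolding s1 ys SR
      by (cases s2; auto simp: vLR_def vR_single vR_cons2 mergeable_def)
  next
    case SL
    then show ?thesis using s1 ys by (cases s2; auto simp: vLR_def vR_single vR_cons2)
  qed
next
  case (3 x y zs)
  then obtain s s' s1' where s1: "s1 = s # s' # s1'" and len: "length s1' = length zs"
    by (cases s1; cases "tl s1") auto
  have IH1: "vR e (zs @ ys) (s1' @ s2) \<longleftrightarrow> (\<exists>e'. vR e' zs s1' \<and> vLR e' e ys s2)"
    using 3(1)[OF len 3(4)] .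
  have IH2: "vR e ((y # zs) @ ys) ((s' # s1') @ s2) \<longleftrightarrow> (\<exists>e'. vR e' (y # zs) (s' # s1') \<and> vLR e' e ys s2)"
    using 3(2)[of "s' # s1'"] len 3(4) by simp
  show ?case
    unfolding s1 append_Cons vR_cons2
    using IH1 IH2 by auto
qed

lemma vLR_append:
  assumes "length s1 = length xs" "xs \<noteq> []" "ys \<noteq> []"
  shows "vLR eL e (xs @ ys) (s1 @ s2) \<longleftrightarrow> (\<exists>e'. vLR eL e' xs s1 \<and> vLR e' e ys s2)"
proof (cases eL)
  case False
  then show ?thesis using vR_append[OF assms(1,3)] by (simp add: vLR_def)
next
  case True
  obtain x xs' where xs: "xs = x # xs'" using assms by (cases xs) auto
  obtain s s1' where s1: "s1 = s # s1'" and len: "length s1' = length xs'" using assms xs by (cases s1) auto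
  show ?thesis
    using True xs s1 vR_append[OF len assms(3)] by (auto simp: vLR_def)
qed

lemma VS_vLR: "VS R = {ss. vLR False False R ss}"
  by (simp add: VS_def vLR_def)

lemma vLR_length: "vLR eL eR R ss \<Longrightarrow> length ss = length R"
  by (auto simp: vLR_def split: if_splits dest: vR_length)

lemma vR_hd: "vR e R ss \<Longrightarrow> ss \<noteq> [] \<Longrightarrow> hd ss \<noteq> SL"
  by (induction e R ss rule: vR.induct) auto

lemma vR_last: "vR e R ss \<Longrightarrow> R \<noteq> [] \<Longrightarrow> (last ss = SR \<longleftrightarrow> e)"
proof (induction e R ss rule: vR.induct)
  case (2 e t ts ss)
  then show ?case by (cases ts) (auto simp: vR_nil)
next
  case (4 e t1 t2 ts ss)
  then show ?case by (cases ts) (auto simp: vR_nil)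
qed auto

lemma vLR_flags:
  assumes "vLR eL eR R ss" "R \<noteq> []"
  shows "(last ss = SR \<longleftrightarrow> eR) \<and> (hd ss = SL \<longleftrightarrow> eL)"
proof (cases eL)
  case False
  then have v: "vR eR R ss" using assms by (simp add: vLR_def)
  have "ss \<noteq> []" using vR_length[OF v] assms(2) by auto
  then show ?thesis using vR_last[OF v assms(2)] vR_hd[OF v] False by auto
next
  case True
  then obtain t ts ss' where R: "R = t # ts" and ss: "ss = SL # ss'" and v: "vR eR ts ss'"
    using assms by (auto simp: vLR_def)
  show ?thesis
  proof (cases "ts = []")
    case True
    then show ?thesis using v R ss \<open>eL\<close> by (auto simp: vR_nil)
  next
    case False
    have "ss' \<noteq> []" using vR_length[OF v] False by auto
    then show ?thesis using vR_last[OF v False] R ss \<open>eL\<close> by auto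
  qed
qed

lemma vLR_flags_unique:
  "vLR eL eR R ss \<Longrightarrow> vLR eL' eR' R ss \<Longrightarrow> R \<noteq> [] \<Longrightarrow> eL = eL' \<and> eR = eR'"
  using vLR_flags by blast

lemma cfgS_append:
  "length s1 = length xs \<Longrightarrow> cfgS p (xs @ ys) (s1 @ s2) = cfgS p xs s1 \<union> cfgS (p + tl_len xs) ys s2"
proof (induction xs arbitrary: s1 p)
  case Nil
  then show ?case by (simp add: tl_len_def)
next
  case (Cons x xs)
  then obtain s s1' where "s1 = s # s1'" "length s1' = length xs" by (cases s1) auto
  then show ?case using Cons.IH[of s1' "p + int (tlen x)"] by (auto simp: tl_len_def add.assoc)
qed

lemma wS_append:
  "length s1 = length xs \<Longrightarrow> wS lam (xs @ ys) (s1 @ s2) = wS lam xs s1 * wS lam ys s2"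
proof (induction xs arbitrary: s1)
  case Nil
  then show ?case by simp
next
  case (Cons x xs)
  then obtain s s1' where "s1 = s # s1'" "length s1' = length xs" by (cases s1) auto
  then show ?case using Cons.IH[of s1'] by auto
qed

lemma cfgS_range_vLR: "vLR eL eR R ss \<Longrightarrow> y \<in> cfgS p R ss \<Longrightarrow> p \<le> y \<and> y < p + tl_len R"
proof (cases eL)
  case False
  assume "vLR eL eR R ss" "y \<in> cfgS p R ss"
  then show ?thesis using False cfgS_range by (auto simp: vLR_def)
next
  case True
  assume a: "vLR eL eR R ss" "y \<in> cfgS p R ss"
  then obtain t ts ss' where R: "R = t # ts" and ss: "ss = SL # ss'" and v: "vR eR ts ss'"
    using True by (auto simp: vLR_def)
  have "y \<in> cfgS (p + int (tlen t)) ts ss'" using a(2) R ss by simp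
  from cfgS_range[OF v this] show ?thesis using R by (simp add: tl_len_def)
qed

definition VV :: "bool \<Rightarrow> bool \<Rightarrow> tile list \<Rightarrow> tst list set" where
  "VV eL eR R = {ss. vLR eL eR R ss}"

lemma finite_VV: "finite (VV eL eR R)"
proof -
  have "VV eL eR R \<subseteq> {xs. set xs \<subseteq> UNIV \<and> length xs = length R}"
    using vLR_length by (auto simp: VV_def)
  moreover have "finite {xs :: tst list. set xs \<subseteq> UNIV \<and> length xs = length R}"
    by (rule finite_lists_length_eq) simp
  ultimately show ?thesis by (rule finite_subset)
qed

lemma sum_split:
  assumes "xs \<noteq> []" "ys \<noteq> []"
  shows "(\<Sum>ss\<in>VV eL e (xs @ ys). f ss) = (\<Sum>e'\<in>UNIV. \<Sum>s1\<in>VV eL e' xs. \<Sum>s2\<in>VV e' e ys. f (s1 @ s2))"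
proof -
  define A where "A e' = (\<lambda>(a, b). a @ b) ` (VV eL e' xs \<times> VV e' e ys)" for e'
  have U: "VV eL e (xs @ ys) = (\<Union>e'\<in>UNIV. A e')"
  proof
    show "VV eL e (xs @ ys) \<subseteq> (\<Union>e'\<in>UNIV. A e')"
    proof
      fix ss assume "ss \<in> VV eL e (xs @ ys)"
      then have v: "vLR eL e (xs @ ys) ss" by (simp add: VV_def)
      have "length ss = length xs + length ys" using vLR_length[OF v] by simp
      define s1 where "s1 = take (length xs) ss"
      define s2 where "s2 = drop (length xs) ss"
      have ss: "ss = s1 @ s2" and len: "length s1 = length xs"
        using \<open>length ss = _\<close> by (auto simp: s1_def s2_def)
      obtain e' where "vLR eL e' xs s1" "vLR e' e ys s2"
        using v vLR_append[OF len assms] ss by auto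
      then show "ss \<in> (\<Union>e'\<in>UNIV. A e')" unfolding A_def VV_def ss by blast
    qed
  next
    show "(\<Union>e'\<in>UNIV. A e') \<subseteq> VV eL e (xs @ ys)"
    proof
      fix ss assume "ss \<in> (\<Union>e'\<in>UNIV. A e')"
      then obtain e' s1 s2 where ss: "ss = s1 @ s2" and v: "vLR eL e' xs s1" "vLR e' e ys s2"
        unfolding A_def VV_def by auto
      have len: "length s1 = length xs" using vLR_length[OF v(1)] .
      show "ss \<in> VV eL e (xs @ ys)" using vLR_append[OF len assms] v ss by (auto simp: VV_def)
    qed
  qed
  have inj: "inj_on (\<lambda>(a, b). a @ b) (VV eL e' xs \<times> VV e' e ys)" for e'
  proof (rule inj_onI, clarify)
    fix a b a' b' assume "a \<in> VV eL e' xs" "b \<in> VV e' e ys" "a' \<in> VV eL e' xs" "b' \<in> VV e' e ys" "a @ b = a' @ b'"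
    moreover have "length a = length a'" using calculation vLR_length by (auto simp: VV_def)
    ultimately show "a = a' \<and> b = b'" by auto
  qed
  have disj: "A e1 \<inter> A e2 = {}" if "e1 \<noteq> e2" for e1 e2
  proof (rule ccontr)
    assume "A e1 \<inter> A e2 \<noteq> {}"
    then obtain a b a' b' where ab: "a \<in> VV eL e1 xs" "b \<in> VV e1 e ys" "a' \<in> VV eL e2 xs" "b' \<in> VV e2 e ys" "a @ b = a' @ b'"
      unfolding A_def by auto
    moreover have "length a = length a'" using calculation vLR_length by (auto simp: VV_def)
    ultimately have "a = a'" by auto
    then have "e1 = e2" using vLR_flags_unique[of eL e1 xs a eL e2] ab assms by (auto simp: VV_def)
    then show False using that by simp
  qed
  have fin: "finite (A e')" for e' unfolding A_def using finite_VV by auto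
  have "(\<Sum>ss\<in>VV eL e (xs @ ys). f ss) = (\<Sum>e'\<in>UNIV. \<Sum>ss\<in>A e'. f ss)"
    unfolding U by (rule sum.UNION_disjoint) (use fin disj in auto)
  also have "\<dots> = (\<Sum>e'\<in>UNIV. \<Sum>p\<in>VV eL e' xs \<times> VV e' e ys. f ((\<lambda>(a, b). a @ b) p))"
    unfolding A_def by (rule sum.cong[OF refl], rule sum.reindex[OF inj, unfolded comp_def])
  also have "\<dots> = (\<Sum>e'\<in>UNIV. \<Sum>s1\<in>VV eL e' xs. \<Sum>s2\<in>VV e' e ys. f (s1 @ s2))"
    by (rule sum.cong[OF refl]) (simp add: sum.cartesian_product split_beta)
  finally show ?thesis .
qed


definition eps :: "int \<Rightarrow> int set \<Rightarrow> complex" where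
  "eps x1 S = (-1) ^ card {y \<in> S. y < x1}"

lemma eps_sq: "eps x1 S ^ 2 = 1"
  by (simp add: eps_def power_mult[symmetric] mult.commute[of _ 2] power_mult)

lemma eps_even: "even n \<Longrightarrow> eps x1 S ^ n = 1"
  by (metis eps_sq evenE power_mult power_one)

lemma eps_remove: "x1 \<le> x \<Longrightarrow> eps x1 (S - {x}) = eps x1 S"
proof -
  assume "x1 \<le> x"
  then have "{y \<in> S - {x}. y < x1} = {y \<in> S. y < x1}" by auto
  then show ?thesis by (simp add: eps_def)
qed

lemma eps_insert: "x1 \<le> x \<Longrightarrow> eps x1 (insert x S) = eps x1 S"
proof -
  assume "x1 \<le> x"
  then have "{y \<in> insert x S. y < x1} = {y \<in> S. y < x1}" by auto
  then show ?thesis by (simp add: eps_def)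
qed

lemma jw_split:
  assumes "finite S" "x1 \<le> x" "x \<le> x2"
  shows "jw_sign S x = eps x1 S * jw_sign (S \<inter> {x1..x2}) x"
proof -
  have "{y \<in> S. y < x} = {y \<in> S. y < x1} \<union> {y \<in> S \<inter> {x1..x2}. y < x}" using assms by auto
  moreover have "{y \<in> S. y < x1} \<inter> {y \<in> S \<inter> {x1..x2}. y < x} = {}" by auto
  moreover have "finite {y \<in> S. y < x1}" "finite {y \<in> S \<inter> {x1..x2}. y < x}" using assms by auto
  ultimately have "card {y \<in> S. y < x} = card {y \<in> S. y < x1} + card {y \<in> S \<inter> {x1..x2}. y < x}"
    by (simp add: card_Un_disjoint)
  then show ?thesis by (simp add: jw_sign_def eps_def power_add)
qed

fun wk :: "(bool \<times> int) list \<Rightarrow> int set \<Rightarrow> int set \<Rightarrow> complex" where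
  "wk [] U T = (if U = T then 1 else 0)"
| "wk ((b, x) # w) U T = (if b then (if x \<in> U then jw_sign U x * wk w (U - {x}) T else 0)
                           else (if x \<notin> U then jw_sign U x * wk w (insert x U) T else 0))"

lemma sum_Pow_ind:
  fixes c :: complex
  assumes "finite Z" "T0 \<subseteq> Z"
  shows "(\<Sum>T\<in>Pow Z. (if T0 = T then c else 0) * g T) = c * g T0"
proof -
  have "\<And>T. (if T0 = T then c else 0) * g T = (if T = T0 then c * g T0 else 0)" by auto
  then have "(\<Sum>T\<in>Pow Z. (if T0 = T then c else 0) * g T) = (\<Sum>T\<in>Pow Z. if T = T0 then c * g T0 else 0)"
    by simp
  also have "\<dots> = c * g T0" using assms by (simp add: sum.delta')
  finally show ?thesis .
qed

lemma word_local:
  fixes x1 x2 :: int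
  defines "X \<equiv> {x1..x2}"
  assumes "word_in X w" "finite S"
  shows "op_word w \<phi> S = eps x1 S ^ length w * (\<Sum>T\<in>Pow X. wk w (S \<inter> X) T * \<phi> ((S - X) \<union> T))"
  using assms(2,3)
proof (induction w arbitrary: S)
  case Nil
  have "(\<Sum>T\<in>Pow X. wk [] (S \<inter> X) T * \<phi> ((S - X) \<union> T)) = 1 * \<phi> ((S - X) \<union> (S \<inter> X))"
    unfolding wk.simps by (rule sum_Pow_ind) (auto simp: X_def)
  also have "(S - X) \<union> (S \<inter> X) = S" by auto
  finally show ?case by simp
next
  case (Cons p w)
  obtain b x where p: "p = (b, x)" by (cases p)
  have xX: "x \<in> X" and wX: "word_in X w" using Cons.prems p by (auto simp: word_in_def)
  have x12: "x1 \<le> x" "x \<le> x2" using xX by (auto simp: X_def)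
  show ?case
  proof (cases b)
    case True
    show ?thesis
    proof (cases "x \<in> S")
      case False
      then have "x \<notin> S \<inter> X" by simp
      then show ?thesis using False True p by (simp add: cre_def)
    next
      case xS: True
      have fS: "finite (S - {x})" using Cons.prems by simp
      have e1: "(S - {x}) \<inter> X = S \<inter> X - {x}" "(S - {x}) - X = S - X" using xX by auto
      have "op_word (p # w) \<phi> S = jw_sign S x * op_word w \<phi> (S - {x})"
        using True xS p by (simp add: cre_def)
      also have "\<dots> = eps x1 S * jw_sign (S \<inter> X) x * (eps x1 S ^ length w *
            (\<Sum>T\<in>Pow X. wk w (S \<inter> X - {x}) T * \<phi> ((S - X) \<union> T)))"
        using Cons.IH[OF wX fS] jw_split[OF Cons.prems(2) x12] eps_remove[OF x12(1)] e1
        by (simp add: X_def)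
      also have "\<dots> = eps x1 S ^ length (p # w) *
            (\<Sum>T\<in>Pow X. (jw_sign (S \<inter> X) x * wk w (S \<inter> X - {x}) T) * \<phi> ((S - X) \<union> T))"
        by (simp add: sum_distrib_left mult.assoc mult.left_commute)
      also have "\<dots> = eps x1 S ^ length (p # w) * (\<Sum>T\<in>Pow X. wk (p # w) (S \<inter> X) T * \<phi> ((S - X) \<union> T))"
        using True xS xX p by simp
      finally show ?thesis .
    qed
  next
    case False
    show ?thesis
    proof (cases "x \<in> S")
      case True
      then have "x \<in> S \<inter> X" using xX by simp
      then show ?thesis using False True p by (simp add: ann_def)
    next
      case xS: False
      have fS: "finite (insert x S)" using Cons.prems by simp
      have e1: "(insert x S) \<inter> X = insert x (S \<inter> X)" "(insert x S) - X = S - X" using xX by auto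
      have "op_word (p # w) \<phi> S = jw_sign S x * op_word w \<phi> (insert x S)"
        using False xS p by (simp add: ann_def)
      also have "\<dots> = eps x1 S * jw_sign (S \<inter> X) x * (eps x1 S ^ length w *
            (\<Sum>T\<in>Pow X. wk w (insert x (S \<inter> X)) T * \<phi> ((S - X) \<union> T)))"
        using Cons.IH[OF wX fS] jw_split[OF Cons.prems(2) x12] eps_insert[OF x12(1)] e1
        by (simp add: X_def)
      also have "\<dots> = eps x1 S ^ length (p # w) *
            (\<Sum>T\<in>Pow X. (jw_sign (S \<inter> X) x * wk w (insert x (S \<inter> X)) T) * \<phi> ((S - X) \<union> T))"
        by (simp add: sum_distrib_left mult.assoc mult.left_commute)
      also have "\<dots> = eps x1 S ^ length (p # w) * (\<Sum>T\<in>Pow X. wk (p # w) (S \<inter> X) T * \<phi> ((S - X) \<union> T))"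
        using False xS xX p by simp
      finally show ?thesis .
    qed
  qed
qed

definition lkern :: "int set \<Rightarrow> fop \<Rightarrow> (int set \<Rightarrow> int set \<Rightarrow> complex) \<Rightarrow> bool" where
  "lkern X A K \<longleftrightarrow> (\<forall>\<phi> S. finite S \<longrightarrow> A \<phi> S = (\<Sum>T\<in>Pow X. K (S \<inter> X) T * \<phi> ((S - X) \<union> T)))"

lemma even_lkern:
  assumes "A \<in> obs_even {x1..x2}"
  shows "\<exists>K. lkern {x1..x2} A K"
proof -
  from assms obtain n :: nat and coef :: "nat \<Rightarrow> complex" and ws where ws: "\<forall>i<n. word_in {x1..x2} (ws i) \<and> even (length (ws i))"
    and A: "A = (\<lambda>\<psi> S. \<Sum>i<n. coef i * op_word (ws i) \<psi> S)"
    unfolding obs_even_def op_span_def by auto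
  define K where "K U T = (\<Sum>i<n. coef i * wk (ws i) U T)" for U T
  have "lkern {x1..x2} A K"
    unfolding lkern_def
  proof (intro allI impI)
    fix \<phi> S assume fS: "finite (S :: int set)"
    have "A \<phi> S = (\<Sum>i<n. coef i * (\<Sum>T\<in>Pow {x1..x2}. wk (ws i) (S \<inter> {x1..x2}) T * \<phi> ((S - {x1..x2}) \<union> T)))"
      unfolding A using word_local[OF _ fS] ws eps_even by (intro sum.cong) auto
    also have "\<dots> = (\<Sum>T\<in>Pow {x1..x2}. K (S \<inter> {x1..x2}) T * \<phi> ((S - {x1..x2}) \<union> T))"
      unfolding K_def by (simp add: sum_distrib_left sum_distrib_right mult.assoc sum.swap[of _ "{..<n}"])
    finally show "A \<phi> S = (\<Sum>T\<in>Pow {x1..x2}. K (S \<inter> {x1..x2}) T * \<phi> ((S - {x1..x2}) \<union> T))" .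
  qed
  then show ?thesis by blast
qed


fun gk :: "int set \<Rightarrow> (bool \<times> int) list \<Rightarrow> int set \<Rightarrow> int set \<Rightarrow> complex" where
  "gk Z [] S T = (if S \<inter> Z = T then 1 else 0)"
| "gk Z ((b, x) # w) S T = (if b then (if x \<in> S then jw_sign S x * gk Z w (S - {x}) T else 0)
                           else (if x \<notin> S then jw_sign S x * gk Z w (insert x S) T else 0))"

lemma word_general:
  assumes "finite Z" "word_in Z w"
  shows "op_word w \<phi> S = (\<Sum>T\<in>Pow Z. gk Z w S T * \<phi> ((S - Z) \<union> T))"
  using assms(2)
proof (induction w arbitrary: S)
  case Nil
  have "(\<Sum>T\<in>Pow Z. gk Z [] S T * \<phi> ((S - Z) \<union> T)) = 1 * \<phi> ((S - Z) \<union> (S \<inter> Z))"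
    unfolding gk.simps by (rule sum_Pow_ind) (auto simp: assms(1))
  also have "(S - Z) \<union> (S \<inter> Z) = S" by auto
  finally show ?case by simp
next
  case (Cons p w)
  obtain b x where p: "p = (b, x)" by (cases p)
  have xZ: "x \<in> Z" and wZ: "word_in Z w" using Cons.prems p by (auto simp: word_in_def)
  have e1: "(S - {x}) - Z = S - Z" "(insert x S) - Z = S - Z" using xZ by auto
  show ?case
  proof (cases b)
    case True
    then show ?thesis using p Cons.IH[OF wZ, of "S - {x}"] e1
      by (auto simp: cre_def sum_distrib_left mult.assoc)
  next
    case False
    then show ?thesis using p Cons.IH[OF wZ, of "insert x S"] e1
      by (auto simp: ann_def sum_distrib_left mult.assoc)
  qed
qed

definition nX :: "int set \<Rightarrow> (bool \<times> int) list \<Rightarrow> nat" where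
  "nX X w = length (filter (\<lambda>p. snd p \<in> X) w)"

lemma gk_parity:
  assumes "finite X" "X \<subseteq> Z" "finite S"
  shows "gk Z w S T \<noteq> 0 \<Longrightarrow> even (card (S \<inter> X) + card (T \<inter> X) + nX X w)"
  using assms(3)
proof (induction w arbitrary: S)
  case Nil
  then have "T = S \<inter> Z" by (simp split: if_splits)
  then have "T \<inter> X = S \<inter> X" using assms(2) by auto
  then show ?case by (simp add: nX_def)
next
  case (Cons p w)
  obtain b x where p: "p = (b, x)" by (cases p)
  show ?case
  proof (cases b)
    case True
    then have xS: "x \<in> S" and g: "gk Z w (S - {x}) T \<noteq> 0" using Cons.prems p by (auto split: if_splits)
    have ev: "even (card ((S - {x}) \<inter> X) + card (T \<inter> X) + nX X w)"
      using Cons.IH[OF g] Cons.prems by simp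
    have c: "card (S \<inter> X) = card ((S - {x}) \<inter> X) + (if x \<in> X then 1 else 0)"
    proof (cases "x \<in> X")
      case True
      have "S \<inter> X = insert x ((S - {x}) \<inter> X)" using xS True by auto
      then show ?thesis using True assms(1) by simp
    next
      case False
      then have "S \<inter> X = (S - {x}) \<inter> X" by auto
      then show ?thesis using False by simp
    qed
    have n: "nX X (p # w) = nX X w + (if x \<in> X then 1 else 0)" using p by (simp add: nX_def)
    show ?thesis using ev c n by (cases "x \<in> X") auto
  next
    case False
    then have xS: "x \<notin> S" and g: "gk Z w (insert x S) T \<noteq> 0" using Cons.prems p by (auto split: if_splits)
    have ev: "even (card ((insert x S) \<inter> X) + card (T \<inter> X) + nX X w)"
      using Cons.IH[OF g] Cons.prems by simp
    have c: "card ((insert x S) \<inter> X) = card (S \<inter> X) + (if x \<in> X then 1 else 0)"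
    proof (cases "x \<in> X")
      case True
      have "(insert x S) \<inter> X = insert x (S \<inter> X)" using True by auto
      then show ?thesis using True assms(1) xS by simp
    next
      case False
      then have "(insert x S) \<inter> X = S \<inter> X" by auto
      then show ?thesis using False by simp
    qed
    have n: "nX X (p # w) = nX X w + (if x \<in> X then 1 else 0)" using p by (simp add: nX_def)
    show ?thesis using ev c n by (cases "x \<in> X") auto
  qed
qed

lemma op_word_append: "op_word (u @ v) = op_word u \<circ> op_word v"
  by (induction u rule: op_word.induct) auto

lemma op_word_sum:
  assumes "finite Z" "word_in Z w"
  shows "op_word w (\<lambda>S. \<Sum>j\<in>J. c j * f j S) S = (\<Sum>j\<in>J. c j * op_word w (f j) S)"
  unfolding word_general[OF assms]
  by (simp add: sum_distrib_left sum_distrib_right mult.assoc mult.left_commute sum.swap[of _ J])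

lemma finner_kernel:
  assumes fin: "finite \<Lambda>" "finite V" and Z: "Z \<subseteq> \<Lambda>" and cf: "\<forall>v\<in>V. cf v \<subseteq> \<Lambda>"
    and B: "\<forall>\<phi> S. S \<subseteq> \<Lambda> \<longrightarrow> B \<phi> S = (\<Sum>T\<in>Pow Z. c S T * \<phi> ((S - Z) \<union> T))"
    and \<psi>: "\<psi> = (\<lambda>S. \<Sum>v\<in>V. if S = cf v then w v else 0)"
  shows "finner \<Lambda> \<psi> (B \<psi>) = (\<Sum>v\<in>V. \<Sum>v'\<in>V. cnj (w v) * w v' *
            (if cf v - Z = cf v' - Z then c (cf v) (cf v' \<inter> Z) else 0))"
proof -
  have fZ: "finite Z" using fin Z finite_subset by blast
  have inner: "(\<Sum>T\<in>Pow Z. if (cf v - Z) \<union> T = cf v' then c (cf v) T else 0)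
      = (if cf v - Z = cf v' - Z then c (cf v) (cf v' \<inter> Z) else 0)" for v v'
  proof -
    have "\<And>T. T \<in> Pow Z \<Longrightarrow> ((cf v - Z) \<union> T = cf v') = (T = cf v' \<inter> Z \<and> cf v - Z = cf v' - Z)"
      by auto
    then have "(\<Sum>T\<in>Pow Z. if (cf v - Z) \<union> T = cf v' then c (cf v) T else 0)
        = (\<Sum>T\<in>Pow Z. if T = cf v' \<inter> Z then (if cf v - Z = cf v' - Z then c (cf v) (cf v' \<inter> Z) else 0) else 0)"
      by (intro sum.cong) auto
    also have "\<dots> = (if cf v - Z = cf v' - Z then c (cf v) (cf v' \<inter> Z) else 0)"
      using fZ by (simp add: sum.delta')
    finally show ?thesis .
  qed
  have Bv: "B \<psi> (cf v) = (\<Sum>v'\<in>V. w v' * (if cf v - Z = cf v' - Z then c (cf v) (cf v' \<inter> Z) else 0))"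
    if "v \<in> V" for v
  proof -
    have "B \<psi> (cf v) = (\<Sum>T\<in>Pow Z. c (cf v) T * (\<Sum>v'\<in>V. if (cf v - Z) \<union> T = cf v' then w v' else 0))"
      using B cf that \<psi> by simp
    also have "\<dots> = (\<Sum>v'\<in>V. w v' * (\<Sum>T\<in>Pow Z. if (cf v - Z) \<union> T = cf v' then c (cf v) T else 0))"
      by (simp add: sum_distrib_left sum.swap[of _ "Pow Z"] if_distrib mult.commute cong: if_cong)
    also have "\<dots> = (\<Sum>v'\<in>V. w v' * (if cf v - Z = cf v' - Z then c (cf v) (cf v' \<inter> Z) else 0))"
      using inner by simp
    finally show ?thesis .
  qed
  have "finner \<Lambda> \<psi> (B \<psi>) = (\<Sum>S\<in>Pow \<Lambda>. \<Sum>v\<in>V. (if S = cf v then cnj (w v) else 0) * B \<psi> S)"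
    unfolding finner_def \<psi> by (simp add: cnj_sum if_distrib sum_distrib_right cong: if_cong)
  also have "\<dots> = (\<Sum>v\<in>V. \<Sum>S\<in>Pow \<Lambda>. if S = cf v then cnj (w v) * B \<psi> S else 0)"
    by (subst sum.swap) (rule sum.cong[OF refl], rule sum.cong[OF refl], simp)
  also have "\<dots> = (\<Sum>v\<in>V. cnj (w v) * B \<psi> (cf v))"
    using fin cf by (intro sum.cong) (auto simp: sum.delta')
  also have "\<dots> = (\<Sum>v\<in>V. \<Sum>v'\<in>V. cnj (w v) * w v' *
            (if cf v - Z = cf v' - Z then c (cf v) (cf v' \<inter> Z) else 0))"
    using Bv by (simp add: sum_distrib_left mult.assoc)
  finally show ?thesis .
qed


lemma sum_Pow_union:
  assumes "X \<inter> Y = {}"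
  shows "(\<Sum>T\<in>Pow (X \<union> Y). h (T \<inter> X) (T \<inter> Y)) = (\<Sum>T1\<in>Pow X. \<Sum>T2\<in>Pow Y. h T1 T2)"
proof -
  have "(\<Sum>T\<in>Pow (X \<union> Y). h (T \<inter> X) (T \<inter> Y)) = (\<Sum>p\<in>Pow X \<times> Pow Y. h (fst p) (snd p))"
    by (rule sum.reindex_bij_witness[where i="\<lambda>p. fst p \<union> snd p" and j="\<lambda>T. (T \<inter> X, T \<inter> Y)"])
       (use assms in auto)
  also have "\<dots> = (\<Sum>T1\<in>Pow X. \<Sum>T2\<in>Pow Y. h T1 T2)"
    by (simp add: sum.cartesian_product split_beta)
  finally show ?thesis .
qed

lemma lkern_comp:
  assumes "lkern X A K1" "lkern Y B K2" "X \<inter> Y = {}" "finite X" "finite Y" "finite S"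
  shows "(A \<circ> B) \<phi> S = (\<Sum>T\<in>Pow (X \<union> Y). K1 (S \<inter> X) (T \<inter> X) * K2 (S \<inter> Y) (T \<inter> Y) * \<phi> ((S - (X \<union> Y)) \<union> T))"
proof -
  have "(A \<circ> B) \<phi> S = (\<Sum>T1\<in>Pow X. K1 (S \<inter> X) T1 * B \<phi> ((S - X) \<union> T1))"
    using assms(1,6) by (simp add: lkern_def)
  also have "\<dots> = (\<Sum>T1\<in>Pow X. \<Sum>T2\<in>Pow Y. K1 (S \<inter> X) T1 * K2 (S \<inter> Y) T2 * \<phi> ((S - (X \<union> Y)) \<union> (T1 \<union> T2)))"
  proof (rule sum.cong[OF refl])
    fix T1 assume T1: "T1 \<in> Pow X"
    have f: "finite ((S - X) \<union> T1)" using assms(4,6) T1 finite_subset by auto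
    have e1: "((S - X) \<union> T1) \<inter> Y = S \<inter> Y" using T1 assms(3) by auto
    have e2: "\<And>T2. (((S - X) \<union> T1) - Y) \<union> T2 = (S - (X \<union> Y)) \<union> (T1 \<union> T2)" using T1 assms(3) by auto
    show "K1 (S \<inter> X) T1 * B \<phi> ((S - X) \<union> T1) = (\<Sum>T2\<in>Pow Y. K1 (S \<inter> X) T1 * K2 (S \<inter> Y) T2 * \<phi> ((S - (X \<union> Y)) \<union> (T1 \<union> T2)))"
      using assms(2) f unfolding lkern_def by (simp add: e1 e2 sum_distrib_left mult.assoc)
  qed
  also have "\<dots> = (\<Sum>T\<in>Pow (X \<union> Y). K1 (S \<inter> X) (T \<inter> X) * K2 (S \<inter> Y) (T \<inter> Y) * \<phi> ((S - (X \<union> Y)) \<union> ((T \<inter> X) \<union> (T \<inter> Y))))"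
    by (rule sum_Pow_union[OF assms(3), symmetric])
  also have "\<dots> = (\<Sum>T\<in>Pow (X \<union> Y). K1 (S \<inter> X) (T \<inter> X) * K2 (S \<inter> Y) (T \<inter> Y) * \<phi> ((S - (X \<union> Y)) \<union> T))"
  proof (rule sum.cong[OF refl])
    fix T assume "T \<in> Pow (X \<union> Y)"
    then have "(T \<inter> X) \<union> (T \<inter> Y) = T" by auto
    then show "K1 (S \<inter> X) (T \<inter> X) * K2 (S \<inter> Y) (T \<inter> Y) * \<phi> ((S - (X \<union> Y)) \<union> ((T \<inter> X) \<union> (T \<inter> Y)))
       = K1 (S \<inter> X) (T \<inter> X) * K2 (S \<inter> Y) (T \<inter> Y) * \<phi> ((S - (X \<union> Y)) \<union> T)" by simp
  qed
  finally show ?thesis .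
qed

definition idK :: "int set \<Rightarrow> int set \<Rightarrow> complex" where
  "idK U T = (if U = T then 1 else 0)"

lemma lkern_id: "finite Y \<Longrightarrow> lkern Y id idK"
  unfolding lkern_def
proof (intro allI impI)
  fix \<phi> :: fvec and S :: "int set"
  assume "finite Y"
  have "(\<Sum>T\<in>Pow Y. idK (S \<inter> Y) T * \<phi> ((S - Y) \<union> T)) = 1 * \<phi> ((S - Y) \<union> (S \<inter> Y))"
    unfolding idK_def by (rule sum_Pow_ind) (auto simp: \<open>finite Y\<close>)
  also have "(S - Y) \<union> (S \<inter> Y) = S" by auto
  finally show "id \<phi> S = (\<Sum>T\<in>Pow Y. idK (S \<inter> Y) T * \<phi> ((S - Y) \<union> T))" by simp
qed

lemma fnorm_cong: "(\<And>S. S \<subseteq> \<Lambda> \<Longrightarrow> f S = g S) \<Longrightarrow> fnorm \<Lambda> f = fnorm \<Lambda> g"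
  unfolding fnorm_def by (metis (no_types, lifting) PowD sum.cong)

lemma fnorm_nonneg: "0 \<le> fnorm \<Lambda> f"
  unfolding fnorm_def by (rule real_sqrt_ge_zero, rule sum_nonneg) simp

lemma fnorm_sq: "(fnorm \<Lambda> f)\<^sup>2 = (\<Sum>S\<in>Pow \<Lambda>. (cmod (f S))\<^sup>2)"
proof -
  have "0 \<le> (\<Sum>S\<in>Pow \<Lambda>. (cmod (f S))\<^sup>2)" by (rule sum_nonneg) simp
  then show ?thesis unfolding fnorm_def by simp
qed

lemma fnorm_scale: "fnorm \<Lambda> (\<lambda>S. c * f S) = cmod c * fnorm \<Lambda> f"
proof -
  have "(\<Sum>S\<in>Pow \<Lambda>. (cmod (c * f S))\<^sup>2) = (cmod c)\<^sup>2 * (\<Sum>S\<in>Pow \<Lambda>. (cmod (f S))\<^sup>2)"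
    by (simp add: norm_mult power_mult_distrib sum_distrib_left)
  then show ?thesis unfolding fnorm_def by (simp add: real_sqrt_mult)
qed

lemma cmod_le_fnorm: "finite \<Lambda> \<Longrightarrow> U \<subseteq> \<Lambda> \<Longrightarrow> cmod (f U) \<le> fnorm \<Lambda> f"
proof -
  assume a: "finite \<Lambda>" "U \<subseteq> \<Lambda>"
  have "(cmod (f U))\<^sup>2 \<le> (\<Sum>S\<in>Pow \<Lambda>. (cmod (f S))\<^sup>2)"
    using a by (intro member_le_sum) auto
  then show ?thesis unfolding fnorm_def by (simp add: real_le_rsqrt)
qed

lemma fnorm_zero: "finite \<Lambda> \<Longrightarrow> fnorm \<Lambda> f = 0 \<Longrightarrow> S \<subseteq> \<Lambda> \<Longrightarrow> f S = 0"
  using cmod_le_fnorm[of \<Lambda> S f] by simp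

lemma finner_self: "finite \<Lambda> \<Longrightarrow> finner \<Lambda> f f = complex_of_real ((fnorm \<Lambda> f)\<^sup>2)"
proof -
  assume "finite \<Lambda>"
  have "finner \<Lambda> f f = (\<Sum>S\<in>Pow \<Lambda>. complex_of_real ((cmod (f S))\<^sup>2))"
    unfolding finner_def by (intro sum.cong refl) (metis complex_norm_square mult.commute)
  also have "\<dots> = complex_of_real ((fnorm \<Lambda> f)\<^sup>2)" by (simp add: fnorm_sq)
  finally show ?thesis .
qed

lemma finner_CS: "finite \<Lambda> \<Longrightarrow> cmod (finner \<Lambda> f g) \<le> fnorm \<Lambda> f * fnorm \<Lambda> g"
proof -
  assume fin: "finite \<Lambda>"
  have "cmod (finner \<Lambda> f g) \<le> (\<Sum>S\<in>Pow \<Lambda>. cmod (f S) * cmod (g S))"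
    unfolding finner_def by (rule order_trans[OF norm_sum]) (simp add: norm_mult)
  also have "\<dots> \<le> fnorm \<Lambda> f * fnorm \<Lambda> g"
  proof (rule power2_le_imp_le)
    show "(\<Sum>S\<in>Pow \<Lambda>. cmod (f S) * cmod (g S))\<^sup>2 \<le> (fnorm \<Lambda> f * fnorm \<Lambda> g)\<^sup>2"
      unfolding power_mult_distrib fnorm_sq by (rule Cauchy_Schwarz_ineq_sum)
    show "0 \<le> fnorm \<Lambda> f * fnorm \<Lambda> g" by (simp add: fnorm_nonneg)
  qed
  finally show ?thesis .
qed

lemma lkern_local:
  assumes "lkern X A K" "X \<subseteq> \<Lambda>" "finite \<Lambda>" "\<And>S. S \<subseteq> \<Lambda> \<Longrightarrow> \<phi> S = \<phi>' S" "S \<subseteq> \<Lambda>"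
  shows "A \<phi> S = A \<phi>' S"
proof -
  have fS: "finite S" using assms finite_subset by blast
  have "\<And>T. T \<in> Pow X \<Longrightarrow> \<phi> ((S - X) \<union> T) = \<phi>' ((S - X) \<union> T)"
    using assms(2,5) by (intro assms(4)) auto
  then show ?thesis using assms(1) fS unfolding lkern_def by (auto intro!: sum.cong)
qed

lemma lkern_scale:
  assumes "lkern X A K" "finite S"
  shows "A (\<lambda>S. c * \<phi> S) S = c * A \<phi> S"
  using assms unfolding lkern_def by (simp add: sum_distrib_left mult.left_commute)

lemma opnorm_bdd:
  assumes "lkern X A K" "X \<subseteq> \<Lambda>" "finite \<Lambda>"
  shows "bdd_above ((\<lambda>\<psi>. fnorm \<Lambda> (A \<psi>)) ` {\<psi>. fnorm \<Lambda> \<psi> \<le> 1})"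
proof -
  define M where "M S = (\<Sum>T\<in>Pow X. cmod (K (S \<inter> X) T))" for S
  have "fnorm \<Lambda> (A \<psi>) \<le> sqrt (\<Sum>S\<in>Pow \<Lambda>. (M S)\<^sup>2)" if "fnorm \<Lambda> \<psi> \<le> 1" for \<psi>
  proof -
    have "cmod (A \<psi> S) \<le> M S" if S: "S \<subseteq> \<Lambda>" for S
    proof -
      have fS: "finite S" using S assms(3) finite_subset by blast
      have "cmod (A \<psi> S) \<le> (\<Sum>T\<in>Pow X. cmod (K (S \<inter> X) T) * cmod (\<psi> ((S - X) \<union> T)))"
        using assms(1) fS unfolding lkern_def by (simp add: norm_mult[symmetric] norm_sum)
      also have "\<dots> \<le> (\<Sum>T\<in>Pow X. cmod (K (S \<inter> X) T) * 1)"
      proof (rule sum_mono, rule mult_left_mono)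
        fix T assume "T \<in> Pow X"
        then have "(S - X) \<union> T \<subseteq> \<Lambda>" using S assms(2) by auto
        then show "cmod (\<psi> ((S - X) \<union> T)) \<le> 1"
          using cmod_le_fnorm[OF assms(3)] \<open>fnorm \<Lambda> \<psi> \<le> 1\<close> order_trans by blast
      qed simp
      finally show ?thesis by (simp add: M_def)
    qed
    then have "(\<Sum>S\<in>Pow \<Lambda>. (cmod (A \<psi> S))\<^sup>2) \<le> (\<Sum>S\<in>Pow \<Lambda>. (M S)\<^sup>2)"
      by (intro sum_mono power_mono) auto
    then show ?thesis unfolding fnorm_def by simp
  qed
  then show ?thesis by (intro bdd_aboveI[where M="sqrt (\<Sum>S\<in>Pow \<Lambda>. (M S)\<^sup>2)"]) auto
qed

lemma opnorm_nonneg: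
  assumes "lkern X A K" "X \<subseteq> \<Lambda>" "finite \<Lambda>"
  shows "0 \<le> opnorm \<Lambda> A"
proof -
  have z: "(\<lambda>S. 0) \<in> {\<psi>. fnorm \<Lambda> \<psi> \<le> 1}" by (simp add: fnorm_def)
  have "0 \<le> fnorm \<Lambda> (A (\<lambda>S. 0))" by (rule fnorm_nonneg)
  also have "\<dots> \<le> opnorm \<Lambda> A"
    unfolding opnorm_def using z opnorm_bdd[OF assms] by (intro cSup_upper) auto
  finally show ?thesis .
qed

lemma opnorm_le:
  assumes "lkern X A K" "X \<subseteq> \<Lambda>" "finite \<Lambda>"
  shows "fnorm \<Lambda> (A \<phi>) \<le> opnorm \<Lambda> A * fnorm \<Lambda> \<phi>"
proof (cases "fnorm \<Lambda> \<phi> = 0")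
  case True
  have "A \<phi> S = A (\<lambda>S. 0) S" if "S \<subseteq> \<Lambda>" for S
    using lkern_local[OF assms, of \<phi> "\<lambda>S. 0" S] fnorm_zero[OF assms(3) True] that by auto
  moreover have "A (\<lambda>S. 0) S = 0" if "S \<subseteq> \<Lambda>" for S
  proof -
    have "finite S" using that assms(3) finite_subset by blast
    then show ?thesis using assms(1) unfolding lkern_def by simp
  qed
  ultimately have "fnorm \<Lambda> (A \<phi>) = fnorm \<Lambda> (\<lambda>S. 0)" by (intro fnorm_cong) auto
  then show ?thesis using True by (simp add: fnorm_def)
next
  case False
  then have pos: "fnorm \<Lambda> \<phi> > 0" using fnorm_nonneg[of \<Lambda> \<phi>] by simp
  define c where "c = complex_of_real (1 / fnorm \<Lambda> \<phi>)"
  define \<phi>' where "\<phi>' = (\<lambda>S. c * \<phi> S)"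
  have n1: "fnorm \<Lambda> \<phi>' = 1" unfolding \<phi>'_def fnorm_scale c_def using pos by (simp add: norm_divide)
  have "fnorm \<Lambda> (A \<phi>') = fnorm \<Lambda> (\<lambda>S. c * A \<phi> S)"
    using lkern_scale[OF assms(1)] assms(3) finite_subset unfolding \<phi>'_def by (intro fnorm_cong) blast
  also have "\<dots> = fnorm \<Lambda> (A \<phi>) / fnorm \<Lambda> \<phi>" unfolding fnorm_scale c_def using pos by (simp add: norm_divide)
  finally have e: "fnorm \<Lambda> (A \<phi>') = fnorm \<Lambda> (A \<phi>) / fnorm \<Lambda> \<phi>" .
  have "fnorm \<Lambda> (A \<phi>') \<le> opnorm \<Lambda> A"
    unfolding opnorm_def using n1 opnorm_bdd[OF assms] by (intro cSup_upper) auto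
  then show ?thesis using e pos by (simp add: divide_le_eq mult.commute)
qed

lemma expect_bound:
  assumes "lkern X A K" "X \<subseteq> \<Lambda>" "finite \<Lambda>"
  shows "cmod (finner \<Lambda> \<phi> (A \<phi>)) \<le> opnorm \<Lambda> A * (fnorm \<Lambda> \<phi>)\<^sup>2"
proof -
  have "cmod (finner \<Lambda> \<phi> (A \<phi>)) \<le> fnorm \<Lambda> \<phi> * fnorm \<Lambda> (A \<phi>)" by (rule finner_CS[OF assms(3)])
  also have "\<dots> \<le> fnorm \<Lambda> \<phi> * (opnorm \<Lambda> A * fnorm \<Lambda> \<phi>)"
    by (rule mult_left_mono[OF opnorm_le[OF assms] fnorm_nonneg])
  finally show ?thesis by (simp add: power2_eq_square mult_ac)
qed


definition okst :: "tile \<Rightarrow> tst \<Rightarrow> bool" where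
  "okst t s \<longleftrightarrow> s = SF \<or> (s = SR \<and> t = Mono) \<or> (s = SL \<and> t \<in> {Mono, RMono1, RMono2})"

lemma vR_okst: "vR e R ss \<Longrightarrow> list_all2 okst R ss"
  by (induction e R ss rule: vR.induct) (auto simp: okst_def mergeable_def)

lemma vLR_okst: "vLR eL eR R ss \<Longrightarrow> list_all2 okst R ss"
  by (auto simp: vLR_def okst_def split: if_splits dest: vR_okst)

lemma cfgS_range2: "list_all2 okst R ss \<Longrightarrow> y \<in> cfgS p R ss \<Longrightarrow> p \<le> y \<and> y < p + tl_len R"
proof (induction R ss arbitrary: p rule: list_all2_induct)
  case Nil
  then show ?case by simp
next
  case (Cons t ts s ss)
  from Cons.prems have "y \<in> pat p t s \<or> y \<in> cfgS (p + int (tlen t)) ts ss" by simp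
  then show ?case
  proof
    assume y: "y \<in> pat p t s"
    have "p \<le> y \<and> y < p + int (tlen t)"
    proof (cases s)
      case SF
      then show ?thesis using y ones_range[of y p "tword t"] by (simp add: tlen_def)
    next
      case SR
      then have "t = Mono" using Cons.hyps by (simp add: okst_def)
      then show ?thesis using y SR by (auto simp: tlen_def)
    next
      case SL
      then show ?thesis using y by simp
    qed
    then show ?thesis by (simp add: tl_len_def)
  next
    assume "y \<in> cfgS (p + int (tlen t)) ts ss"
    from Cons.IH[OF this] show ?thesis by (simp add: tl_len_def)
  qed
qed

lemma cfgS_inj:
  "list_all2 okst B \<beta> \<Longrightarrow> list_all2 okst B \<beta>' \<Longrightarrow> set B \<subseteq> {Mono, Void} \<Longrightarrow>
   cfgS p B \<beta> = cfgS p B \<beta>' \<Longrightarrow> \<beta> = \<beta>'"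
proof (induction B arbitrary: \<beta> \<beta>' p)
  case Nil
  then show ?case by simp
next
  case (Cons t B)
  obtain s \<beta>r where b: "\<beta> = s # \<beta>r" and ok: "okst t s" "list_all2 okst B \<beta>r"
    using Cons.prems(1) by (cases \<beta>) auto
  obtain s' \<beta>r' where b': "\<beta>' = s' # \<beta>r'" and ok': "okst t s'" "list_all2 okst B \<beta>r'"
    using Cons.prems(2) by (cases \<beta>') auto
  let ?q = "p + int (tlen t)"
  have patr: "pat p t x \<subseteq> {p..<?q}" if "okst t x" for x
  proof (cases x)
    case SF
    then show ?thesis using ones_range[of _ p "tword t"] by (auto simp: tlen_def)
  next
    case SR
    then have "t = Mono" using that by (simp add: okst_def)
    then show ?thesis using SR by (auto simp: tlen_def)
  qed simp
  have r1: "cfgS ?q B \<beta>r \<subseteq> {?q..}" "cfgS ?q B \<beta>r' \<subseteq> {?q..}"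
    using cfgS_range2[OF ok(2)] cfgS_range2[OF ok'(2)] by auto
  have C: "pat p t s \<union> cfgS ?q B \<beta>r = pat p t s' \<union> cfgS ?q B \<beta>r'"
    using Cons.prems(4) b b' by simp
  have "pat p t s = (pat p t s \<union> cfgS ?q B \<beta>r) \<inter> {p..<?q}" using patr[OF ok(1)] r1 by auto
  also have "\<dots> = (pat p t s' \<union> cfgS ?q B \<beta>r') \<inter> {p..<?q}" using C by simp
  also have "\<dots> = pat p t s'" using patr[OF ok'(1)] r1 by auto
  finally have pe: "pat p t s = pat p t s'" .
  have "cfgS ?q B \<beta>r = (pat p t s \<union> cfgS ?q B \<beta>r) \<inter> {?q..}" using patr[OF ok(1)] r1 by auto
  also have "\<dots> = (pat p t s' \<union> cfgS ?q B \<beta>r') \<inter> {?q..}" using C by simp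
  also have "\<dots> = cfgS ?q B \<beta>r'" using patr[OF ok'(1)] r1 by auto
  finally have re: "cfgS ?q B \<beta>r = cfgS ?q B \<beta>r'" .
  have "s = s'"
  proof -
    have t: "t = Mono \<or> t = Void" using Cons.prems(3) by auto
    then show ?thesis
    proof
      assume "t = Void"
      then show ?thesis using ok(1) ok'(1) by (simp add: okst_def)
    next
      assume tM: "t = Mono"
      show ?thesis using pe tM by (cases s; cases s') auto
    qed
  qed
  moreover have "\<beta>r = \<beta>r'" using Cons.IH[OF ok(2) ok'(2) _ re] Cons.prems(3) by simp
  ultimately show ?case using b b' by simp
qed

definition nb :: "tile list \<Rightarrow> nat" where
  "nb R = sum_list (map (\<lambda>t. length (filter id (tword t))) R)"

lemma card_ones: "card (ones p w) = length (filter id w)"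
proof (induction w arbitrary: p)
  case Nil
  then show ?case by simp
next
  case (Cons x w)
  have "p \<notin> ones (p + 1) w" using ones_range[of p "p + 1" w] by auto
  then show ?case using Cons.IH[of "p + 1"] finite_ones by simp
qed

lemma finite_cfgS: "finite (cfgS p R ss)"
proof (induction p R ss rule: cfgS.induct)
  case (1 p t ts s ss)
  then show ?case by (cases s) (auto simp: finite_ones)
qed auto

lemma card_cfg_vR: "vR e R ss \<Longrightarrow> card (cfgS p R ss) = nb R + (if e then 1 else 0)"
proof (induction e R ss arbitrary: p rule: vR.induct)
  case (2 e t ts ss)
  have v: "vR e ts ss" using 2(2) by simp
  have d: "ones p (tword t) \<inter> cfgS (p + int (tlen t)) ts ss = {}"
    using ones_range[of _ p "tword t"] cfgS_range[OF v, of _ "p + int (tlen t)"] by (force simp: tlen_def)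
  have "card (cfgS p (t # ts) (SF # ss)) = card (ones p (tword t)) + card (cfgS (p + int (tlen t)) ts ss)"
    using d by (simp add: card_Un_disjoint finite_ones finite_cfgS)
  then show ?case using 2(1)[OF v] by (simp add: card_ones nb_def)
next
  case (3 e t)
  then show ?case by (simp add: nb_def)
next
  case (4 e t1 t2 ts ss)
  have v: "vR e ts ss" and m: "t1 = Mono" "t2 \<in> {Mono, RMono1, RMono2}" using 4(2) by (auto simp: mergeable_def)
  let ?q = "p + int (tlen t1) + int (tlen t2)"
  have d: "{p + 1, p + 2} \<inter> cfgS ?q ts ss = {}"
    using cfgS_range[OF v, of _ ?q] m by (force simp: tlen_def)
  have "card (cfgS p (t1 # t2 # ts) (SR # SL # ss)) = 2 + card (cfgS ?q ts ss)"
    using d by (simp add: card_Un_disjoint finite_cfgS)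
  moreover have "nb (t1 # t2 # ts) = 2 + nb ts" using m by (auto simp: nb_def)
  ultimately show ?case using 4(1)[OF v] by simp
qed (auto simp: nb_def)

lemma card_cfg:
  "vLR eL eR R ss \<Longrightarrow> card (cfgS p R ss) + (if eL then 1 else 0) = nb R + (if eR then 1 else 0)"
proof (cases eL)
  case False
  assume "vLR eL eR R ss"
  then show ?thesis using False card_cfg_vR by (simp add: vLR_def)
next
  case True
  assume "vLR eL eR R ss"
  then obtain t ts ss' where R: "R = t # ts" and ss: "ss = SL # ss'" and t: "t \<in> {Mono, RMono1, RMono2}"
    and v: "vR eR ts ss'" using True by (auto simp: vLR_def)
  have "nb R = 1 + nb ts" using R t by (auto simp: nb_def)
  then show ?thesis using card_cfg_vR[OF v] R ss True by simp
qed


lemma split3: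
  assumes "RL \<noteq> []" "B \<noteq> []" "RR \<noteq> []"
  shows "(\<Sum>ss\<in>VS (RL @ B @ RR). f ss) = (\<Sum>e1\<in>UNIV. \<Sum>e2\<in>UNIV. \<Sum>\<beta>\<in>VV e1 e2 B.
            \<Sum>l\<in>VV False e1 RL. \<Sum>\<rho>\<in>VV e2 False RR. f (l @ \<beta> @ \<rho>))"
proof -
  have "VS (RL @ B @ RR) = VV False False (RL @ (B @ RR))" by (simp add: VS_vLR VV_def)
  then have "(\<Sum>ss\<in>VS (RL @ B @ RR). f ss) = (\<Sum>e1\<in>UNIV. \<Sum>l\<in>VV False e1 RL. \<Sum>s\<in>VV e1 False (B @ RR). f (l @ s))"
    using sum_split[of RL "B @ RR"] assms by simp
  also have "\<dots> = (\<Sum>e1\<in>UNIV. \<Sum>l\<in>VV False e1 RL. \<Sum>e2\<in>UNIV. \<Sum>\<beta>\<in>VV e1 e2 B. \<Sum>\<rho>\<in>VV e2 False RR. f (l @ \<beta> @ \<rho>))"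
    by (intro sum.cong refl) (rule sum_split[OF assms(2,3)])
  also have "\<dots> = (\<Sum>e1\<in>UNIV. \<Sum>e2\<in>UNIV. \<Sum>l\<in>VV False e1 RL. \<Sum>\<beta>\<in>VV e1 e2 B. \<Sum>\<rho>\<in>VV e2 False RR. f (l @ \<beta> @ \<rho>))"
    by (rule sum.cong[OF refl], rule sum.swap)
  also have "\<dots> = (\<Sum>e1\<in>UNIV. \<Sum>e2\<in>UNIV. \<Sum>\<beta>\<in>VV e1 e2 B. \<Sum>l\<in>VV False e1 RL. \<Sum>\<rho>\<in>VV e2 False RR. f (l @ \<beta> @ \<rho>))"
    by (rule sum.cong[OF refl], rule sum.cong[OF refl], rule sum.swap)
  finally show ?thesis .
qed

lemma vs_decomp:
  assumes "RL \<noteq> []" "B \<noteq> []" "RR \<noteq> []" "ss \<in> VS (RL @ B @ RR)"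
  shows "\<exists>e1 e2 l \<beta> \<rho>. ss = l @ \<beta> @ \<rho> \<and> l \<in> VV False e1 RL \<and> \<beta> \<in> VV e1 e2 B \<and> \<rho> \<in> VV e2 False RR"
proof -
  have v: "vLR False False (RL @ (B @ RR)) ss" using assms(4) by (simp add: VS_vLR)
  have len: "length ss = length RL + length B + length RR" using vLR_length[OF v] by simp
  define l where "l = take (length RL) ss"
  define s where "s = drop (length RL) ss"
  have ss: "ss = l @ s" "length l = length RL" using len by (auto simp: l_def s_def)
  obtain e1 where e1: "vLR False e1 RL l" "vLR e1 False (B @ RR) s"
    using vLR_append[OF ss(2) assms(1) _] assms(3) v ss(1) by auto
  have lens: "length s = length B + length RR" using vLR_length[OF e1(2)] by simp
  define \<beta> where "\<beta> = take (length B) s"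
  define \<rho> where "\<rho> = drop (length B) s"
  have s: "s = \<beta> @ \<rho>" "length \<beta> = length B" using lens by (auto simp: \<beta>_def \<rho>_def)
  obtain e2 where e2: "vLR e1 e2 B \<beta>" "vLR e2 False RR \<rho>"
    using vLR_append[OF s(2) assms(2,3)] e1(2) s(1) by auto
  show ?thesis unfolding VV_def using ss(1) s(1) e1(1) e2 by blast
qed

definition DL :: "complex \<Rightarrow> int \<Rightarrow> tile list \<Rightarrow> int set \<Rightarrow> bool \<Rightarrow> (int set \<Rightarrow> int set \<Rightarrow> complex) \<Rightarrow> complex" where
  "DL lam p RL P e K = (\<Sum>l\<in>VV False e RL. \<Sum>l'\<in>VV False e RL. cnj (wS lam RL l) * wS lam RL l' *
      (if cfgS p RL l - P = cfgS p RL l' - P then K (cfgS p RL l \<inter> P) (cfgS p RL l' \<inter> P) else 0))"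

definition DR :: "complex \<Rightarrow> int \<Rightarrow> tile list \<Rightarrow> int set \<Rightarrow> bool \<Rightarrow> (int set \<Rightarrow> int set \<Rightarrow> complex) \<Rightarrow> complex" where
  "DR lam p RR Q e K = (\<Sum>\<rho>\<in>VV e False RR. \<Sum>\<rho>'\<in>VV e False RR. cnj (wS lam RR \<rho>) * wS lam RR \<rho>' *
      (if cfgS p RR \<rho> - Q = cfgS p RR \<rho>' - Q then K (cfgS p RR \<rho> \<inter> Q) (cfgS p RR \<rho>' \<inter> Q) else 0))"

definition pB :: "complex \<Rightarrow> tile list \<Rightarrow> bool \<Rightarrow> bool \<Rightarrow> complex" where
  "pB lam B e1 e2 = (\<Sum>\<beta>\<in>VV e1 e2 B. cnj (wS lam B \<beta>) * wS lam B \<beta>)"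

lemma union3_eq:
  fixes X1 X2 X3 Y1 Y2 Y3 :: "int set"
  assumes "X1 \<subseteq> {..<u}" "Y1 \<subseteq> {..<u}" "X2 \<subseteq> {u..<v}" "Y2 \<subseteq> {u..<v}" "X3 \<subseteq> {v..}" "Y3 \<subseteq> {v..}" "u \<le> v"
  shows "(X1 \<union> X2 \<union> X3 = Y1 \<union> Y2 \<union> Y3) \<longleftrightarrow> X1 = Y1 \<and> X2 = Y2 \<and> X3 = Y3"
proof
  assume e: "X1 \<union> X2 \<union> X3 = Y1 \<union> Y2 \<union> Y3"
  have "X1 = (X1 \<union> X2 \<union> X3) \<inter> {..<u}" "Y1 = (Y1 \<union> Y2 \<union> Y3) \<inter> {..<u}"
    "X2 = (X1 \<union> X2 \<union> X3) \<inter> {u..<v}" "Y2 = (Y1 \<union> Y2 \<union> Y3) \<inter> {u..<v}"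
    "X3 = (X1 \<union> X2 \<union> X3) \<inter> {v..}" "Y3 = (Y1 \<union> Y2 \<union> Y3) \<inter> {v..}"
    using assms by fastforce+
  then show "X1 = Y1 \<and> X2 = Y2 \<and> X3 = Y3" using e by metis
qed auto

lemma set3:
  fixes X1 X2 X3 P Q :: "int set"
  assumes "X1 \<subseteq> {..<u}" "X2 \<subseteq> {u..<v}" "X3 \<subseteq> {v..}" "P \<subseteq> {..<u}" "Q \<subseteq> {v..}" "u \<le> v"
  shows "(X1 \<union> X2 \<union> X3) - (P \<union> Q) = (X1 - P) \<union> X2 \<union> (X3 - Q)"
    "(X1 \<union> X2 \<union> X3) \<inter> P = X1 \<inter> P" "(X1 \<union> X2 \<union> X3) \<inter> Q = X3 \<inter> Q"
proof -
  have a: "x \<notin> P" if "x \<in> X2 \<or> x \<in> X3" for x using that assms by fastforce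
  have b: "x \<notin> Q" if "x \<in> X1 \<or> x \<in> X2" for x using that assms by fastforce
  show "(X1 \<union> X2 \<union> X3) - (P \<union> Q) = (X1 - P) \<union> X2 \<union> (X3 - Q)" using a b by blast
  show "(X1 \<union> X2 \<union> X3) \<inter> P = X1 \<inter> P" using a by blast
  show "(X1 \<union> X2 \<union> X3) \<inter> Q = X3 \<inter> Q" using b by blast
qed

lemma sum4_factor:
  fixes f g :: "'a \<Rightarrow> 'a \<Rightarrow> complex"
  shows "(\<Sum>l\<in>A. \<Sum>r\<in>B. \<Sum>l'\<in>A. \<Sum>r'\<in>B. f l l' * c * g r r') = c * (\<Sum>l\<in>A. \<Sum>l'\<in>A. f l l') * (\<Sum>r\<in>B. \<Sum>r'\<in>B. g r r')"
proof -
  have "(\<Sum>r\<in>B. \<Sum>l'\<in>A. \<Sum>r'\<in>B. f l l' * c * g r r') = (\<Sum>l'\<in>A. \<Sum>r\<in>B. \<Sum>r'\<in>B. f l l' * c * g r r')" for l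
    by (rule sum.swap)
  then have "(\<Sum>l\<in>A. \<Sum>r\<in>B. \<Sum>l'\<in>A. \<Sum>r'\<in>B. f l l' * c * g r r') = (\<Sum>l\<in>A. \<Sum>l'\<in>A. \<Sum>r\<in>B. \<Sum>r'\<in>B. f l l' * c * g r r')"
    by simp
  also have "\<dots> = (\<Sum>l\<in>A. \<Sum>l'\<in>A. (f l l' * c) * (\<Sum>r\<in>B. \<Sum>r'\<in>B. g r r'))"
    by (simp only: sum_distrib_left)
  also have "\<dots> = c * (\<Sum>l\<in>A. \<Sum>l'\<in>A. f l l') * (\<Sum>r\<in>B. \<Sum>r'\<in>B. g r r')"
    by (simp only: sum_distrib_right sum_distrib_left mult_ac)
  finally show ?thesis .
qed

lemma tl_len_nonneg: "0 \<le> tl_len R"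
  by (simp add: tl_len_def)

lemma master:
  fixes RL B RR :: "tile list" and a :: int and P Q :: "int set"
  defines "R \<equiv> RL @ B @ RR" and "bs \<equiv> a + tl_len RL" and "br \<equiv> a + tl_len RL + tl_len B"
  assumes ne: "RL \<noteq> []" "B \<noteq> []" "RR \<noteq> []" and BM: "set B \<subseteq> {Mono, Void}"
    and PQ: "P \<subseteq> {..<bs}" "Q \<subseteq> {br..}"
  shows "(\<Sum>ss\<in>VS R. \<Sum>ss'\<in>VS R. cnj (wS lam R ss) * wS lam R ss' *
            (if cfgS a R ss - (P \<union> Q) = cfgS a R ss' - (P \<union> Q)
             then K1 (cfgS a R ss \<inter> P) (cfgS a R ss' \<inter> P) * K2 (cfgS a R ss \<inter> Q) (cfgS a R ss' \<inter> Q) else 0))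
       = (\<Sum>e1\<in>UNIV. \<Sum>e2\<in>UNIV. pB lam B e1 e2 * DL lam a RL P e1 K1 * DR lam br RR Q e2 K2)"
proof -
  define cL where "cL l = cfgS a RL l" for l
  define cB where "cB \<beta> = cfgS bs B \<beta>" for \<beta>
  define cR where "cR \<rho> = cfgS br RR \<rho>" for \<rho>
  define wL where "wL l = wS lam RL l" for l
  define wB where "wB \<beta> = wS lam B \<beta>" for \<beta>
  define wR where "wR \<rho> = wS lam RR \<rho>" for \<rho>
  define GL where "GL l l' = cnj (wL l) * wL l' * (if cL l - P = cL l' - P then K1 (cL l \<inter> P) (cL l' \<inter> P) else 0)" for l l'
  define GR where "GR \<rho> \<rho>' = cnj (wR \<rho>) * wR \<rho>' * (if cR \<rho> - Q = cR \<rho>' - Q then K2 (cR \<rho> \<inter> Q) (cR \<rho>' \<inter> Q) else 0)" for \<rho> \<rho>'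
  define F where "F ss ss' = cnj (wS lam R ss) * wS lam R ss' *
            (if cfgS a R ss - (P \<union> Q) = cfgS a R ss' - (P \<union> Q)
             then K1 (cfgS a R ss \<inter> P) (cfgS a R ss' \<inter> P) * K2 (cfgS a R ss \<inter> Q) (cfgS a R ss' \<inter> Q) else 0)" for ss ss'
  have cf: "cfgS a R (l @ \<beta> @ \<rho>) = cL l \<union> cB \<beta> \<union> cR \<rho>" "wS lam R (l @ \<beta> @ \<rho>) = wL l * wB \<beta> * wR \<rho>"
    if "l \<in> VV False e1 RL" "\<beta> \<in> VV e1 e2 B" "\<rho> \<in> VV e2 False RR" for l \<beta> \<rho> e1 e2
  proof -
    have ll: "length l = length RL" "length \<beta> = length B" using that vLR_length by (auto simp: VV_def)
    show "cfgS a R (l @ \<beta> @ \<rho>) = cL l \<union> cB \<beta> \<union> cR \<rho>"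
      unfolding R_def cfgS_append[OF ll(1)] cfgS_append[OF ll(2)] cL_def cB_def cR_def bs_def br_def
      by (simp add: add.assoc Un_assoc)
    show "wS lam R (l @ \<beta> @ \<rho>) = wL l * wB \<beta> * wR \<rho>"
      unfolding R_def wS_append[OF ll(1)] wS_append[OF ll(2)] wL_def wB_def wR_def by (simp add: mult.assoc)
  qed
  have rng: "cL l \<subseteq> {..<bs}" "cB \<beta> \<subseteq> {bs..<br}" "cR \<rho> \<subseteq> {br..}"
    if "l \<in> VV False e1 RL" "\<beta> \<in> VV e1 e2 B" "\<rho> \<in> VV e2 False RR" for l \<beta> \<rho> e1 e2
    using that cfgS_range_vLR unfolding cL_def cB_def cR_def VV_def bs_def br_def by fastforce+
  have Fe: "F (l @ \<beta> @ \<rho>) (l' @ \<beta>' @ \<rho>') = (if cB \<beta> = cB \<beta>' then GL l l' * (cnj (wB \<beta>) * wB \<beta>') * GR \<rho> \<rho>' else 0)"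
    if v: "l \<in> VV False e1 RL" "\<beta> \<in> VV e1 e2 B" "\<rho> \<in> VV e2 False RR"
      and v': "l' \<in> VV False e1' RL" "\<beta>' \<in> VV e1' e2' B" "\<rho>' \<in> VV e2' False RR"
    for l \<beta> \<rho> e1 e2 l' \<beta>' \<rho>' e1' e2'
  proof -
    note r = rng[OF v] and r' = rng[OF v']
    have uv: "bs \<le> br" unfolding bs_def br_def using tl_len_nonneg[of B] by simp
    note s1 = set3[OF r(1,2,3) PQ uv] and s2 = set3[OF r'(1,2,3) PQ uv]
    have eq: "((cL l - P) \<union> cB \<beta> \<union> (cR \<rho> - Q) = (cL l' - P) \<union> cB \<beta>' \<union> (cR \<rho>' - Q)) \<longleftrightarrow>
        (cL l - P = cL l' - P \<and> cB \<beta> = cB \<beta>' \<and> cR \<rho> - Q = cR \<rho>' - Q)"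
      by (rule union3_eq[where u=bs and v=br]) (use r r' uv in auto)
    show ?thesis
      unfolding F_def cf[OF v] cf[OF v'] s1 s2 eq GL_def GR_def
      by (simp add: mult_ac)
  qed
  have delta: "(\<Sum>e1'\<in>UNIV. \<Sum>e2'\<in>UNIV. \<Sum>\<beta>'\<in>VV e1' e2' B. if cB \<beta> = cB \<beta>' then H e1' e2' \<beta>' else 0) = H e1 e2 \<beta>"
    if "\<beta> \<in> VV e1 e2 B" for \<beta> e1 e2 and H :: "bool \<Rightarrow> bool \<Rightarrow> tst list \<Rightarrow> complex"
  proof -
    have one: "(\<Sum>\<beta>'\<in>VV e1' e2' B. if cB \<beta> = cB \<beta>' then H e1' e2' \<beta>' else 0) = (if e1' = e1 \<and> e2' = e2 then H e1 e2 \<beta> else 0)" for e1' e2'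
    proof -
      have "(cB \<beta> = cB \<beta>') \<longleftrightarrow> (\<beta>' = \<beta> \<and> e1' = e1 \<and> e2' = e2)" if "\<beta>' \<in> VV e1' e2' B" for \<beta>'
      proof
        assume "cB \<beta> = cB \<beta>'"
        then have "\<beta> = \<beta>'" using cfgS_inj[OF vLR_okst vLR_okst BM] \<open>\<beta> \<in> VV e1 e2 B\<close> that
          unfolding cB_def VV_def by blast
        then show "\<beta>' = \<beta> \<and> e1' = e1 \<and> e2' = e2"
          using vLR_flags_unique[of e1 e2 B \<beta> e1' e2'] \<open>\<beta> \<in> VV e1 e2 B\<close> that ne(2) by (auto simp: VV_def)
      qed auto
      then have "(\<Sum>\<beta>'\<in>VV e1' e2' B. if cB \<beta> = cB \<beta>' then H e1' e2' \<beta>' else 0)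
          = (\<Sum>\<beta>'\<in>VV e1' e2' B. if \<beta>' = \<beta> \<and> e1' = e1 \<and> e2' = e2 then H e1' e2' \<beta>' else 0)"
        by (intro sum.cong) auto
      also have "\<dots> = (if e1' = e1 \<and> e2' = e2 then H e1 e2 \<beta> else 0)"
        using \<open>\<beta> \<in> VV e1 e2 B\<close> finite_VV by (cases "e1' = e1 \<and> e2' = e2") (auto simp: sum.delta)
      finally show ?thesis .
    qed
    show ?thesis unfolding one by (cases e1; cases e2) (simp_all add: UNIV_bool)
  qed
  have inner: "(\<Sum>ss'\<in>VS R. F (l @ \<beta> @ \<rho>) ss') =
      (\<Sum>l'\<in>VV False e1 RL. \<Sum>\<rho>'\<in>VV e2 False RR. GL l l' * (cnj (wB \<beta>) * wB \<beta>) * GR \<rho> \<rho>')"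
    if v: "l \<in> VV False e1 RL" "\<beta> \<in> VV e1 e2 B" "\<rho> \<in> VV e2 False RR" for l \<beta> \<rho> e1 e2
  proof -
    have "(\<Sum>ss'\<in>VS R. F (l @ \<beta> @ \<rho>) ss') = (\<Sum>e1'\<in>UNIV. \<Sum>e2'\<in>UNIV. \<Sum>\<beta>'\<in>VV e1' e2' B.
            \<Sum>l'\<in>VV False e1' RL. \<Sum>\<rho>'\<in>VV e2' False RR. F (l @ \<beta> @ \<rho>) (l' @ \<beta>' @ \<rho>'))"
      unfolding R_def by (rule split3[OF ne])
    also have "\<dots> = (\<Sum>e1'\<in>UNIV. \<Sum>e2'\<in>UNIV. \<Sum>\<beta>'\<in>VV e1' e2' B.
            if cB \<beta> = cB \<beta>' then (\<Sum>l'\<in>VV False e1' RL. \<Sum>\<rho>'\<in>VV e2' False RR. GL l l' * (cnj (wB \<beta>) * wB \<beta>') * GR \<rho> \<rho>') else 0)"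
      by (intro sum.cong refl) (simp add: Fe[OF v])
    also have "\<dots> = (\<Sum>l'\<in>VV False e1 RL. \<Sum>\<rho>'\<in>VV e2 False RR. GL l l' * (cnj (wB \<beta>) * wB \<beta>) * GR \<rho> \<rho>')"
      by (rule delta[OF v(2), where H="\<lambda>e1' e2' \<beta>'. \<Sum>l'\<in>VV False e1' RL. \<Sum>\<rho>'\<in>VV e2' False RR. GL l l' * (cnj (wB \<beta>) * wB \<beta>') * GR \<rho> \<rho>'"])
    finally show ?thesis .
  qed
  have "(\<Sum>ss\<in>VS R. \<Sum>ss'\<in>VS R. F ss ss') = (\<Sum>e1\<in>UNIV. \<Sum>e2\<in>UNIV. \<Sum>\<beta>\<in>VV e1 e2 B.
            \<Sum>l\<in>VV False e1 RL. \<Sum>\<rho>\<in>VV e2 False RR. \<Sum>ss'\<in>VS R. F (l @ \<beta> @ \<rho>) ss')"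
    unfolding R_def by (rule split3[OF ne])
  also have "\<dots> = (\<Sum>e1\<in>UNIV. \<Sum>e2\<in>UNIV. \<Sum>\<beta>\<in>VV e1 e2 B.
            \<Sum>l\<in>VV False e1 RL. \<Sum>\<rho>\<in>VV e2 False RR.
            \<Sum>l'\<in>VV False e1 RL. \<Sum>\<rho>'\<in>VV e2 False RR. GL l l' * (cnj (wB \<beta>) * wB \<beta>) * GR \<rho> \<rho>')"
    by (rule sum.cong[OF refl], rule sum.cong[OF refl], rule sum.cong[OF refl], rule sum.cong[OF refl],
        rule sum.cong[OF refl], rule inner) auto
  also have "\<dots> = (\<Sum>e1\<in>UNIV. \<Sum>e2\<in>UNIV. pB lam B e1 e2 * DL lam a RL P e1 K1 * DR lam br RR Q e2 K2)"
  proof (intro sum.cong refl)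
    fix e1 e2
    have "(\<Sum>l\<in>VV False e1 RL. \<Sum>\<rho>\<in>VV e2 False RR. \<Sum>l'\<in>VV False e1 RL. \<Sum>\<rho>'\<in>VV e2 False RR. GL l l' * c * GR \<rho> \<rho>')
        = c * (\<Sum>l\<in>VV False e1 RL. \<Sum>l'\<in>VV False e1 RL. GL l l') * (\<Sum>\<rho>\<in>VV e2 False RR. \<Sum>\<rho>'\<in>VV e2 False RR. GR \<rho> \<rho>')" for c
      by (rule sum4_factor)
    then have "(\<Sum>\<beta>\<in>VV e1 e2 B. \<Sum>l\<in>VV False e1 RL. \<Sum>\<rho>\<in>VV e2 False RR. \<Sum>l'\<in>VV False e1 RL. \<Sum>\<rho>'\<in>VV e2 False RR.
              GL l l' * (cnj (wB \<beta>) * wB \<beta>) * GR \<rho> \<rho>')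
        = (\<Sum>\<beta>\<in>VV e1 e2 B. (cnj (wB \<beta>) * wB \<beta>) * (\<Sum>l\<in>VV False e1 RL. \<Sum>l'\<in>VV False e1 RL. GL l l') * (\<Sum>\<rho>\<in>VV e2 False RR. \<Sum>\<rho>'\<in>VV e2 False RR. GR \<rho> \<rho>'))"
      by simp
    also have "\<dots> = pB lam B e1 e2 * DL lam a RL P e1 K1 * DR lam br RR Q e2 K2"
      unfolding pB_def DL_def DR_def GL_def GR_def wB_def wL_def wR_def cL_def cR_def
      by (simp add: sum_distrib_right)
    finally show "(\<Sum>\<beta>\<in>VV e1 e2 B. \<Sum>l\<in>VV False e1 RL. \<Sum>\<rho>\<in>VV e2 False RR. \<Sum>l'\<in>VV False e1 RL. \<Sum>\<rho>'\<in>VV e2 False RR.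
              GL l l' * (cnj (wB \<beta>) * wB \<beta>) * GR \<rho> \<rho>') = pB lam B e1 e2 * DL lam a RL P e1 K1 * DR lam br RR Q e2 K2" .
  qed
  finally show ?thesis unfolding F_def .
qed


lemma cov_identity:
  fixes p00 p01 p10 p11 n0 n1 v0 v1 a0 a1 b0 b1 :: complex
  shows "(p00*n0*v0 + p01*n0*v1 + p10*n1*v0 + p11*n1*v1) * (p00*a0*b0 + p01*a0*b1 + p10*a1*b0 + p11*a1*b1)
     - (p00*a0*v0 + p01*a0*v1 + p10*a1*v0 + p11*a1*v1) * (p00*n0*b0 + p01*n0*b1 + p10*n1*b0 + p11*n1*b1)
     = (p00*p11 - p01*p10) * (a1*n0 - a0*n1) * (b1*v0 - b0*v1)"
  by (simp add: algebra_simps)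

lemma diff_bound:
  fixes a0 a1 :: complex and n0 n1 \<alpha> :: real
  assumes "0 \<le> n0" "0 \<le> n1" "cmod a0 \<le> \<alpha> * n0" "cmod a1 \<le> \<alpha> * n1"
  shows "cmod (a1 * of_real n0 - a0 * of_real n1) \<le> 2 * \<alpha> * n0 * n1"
proof -
  have "cmod (a1 * of_real n0 - a0 * of_real n1) \<le> cmod a1 * n0 + cmod a0 * n1"
    using norm_triangle_ineq4[of "a1 * of_real n0" "a0 * of_real n1"] assms(1,2) by (simp add: norm_mult)
  also have "\<dots> \<le> \<alpha> * n1 * n0 + \<alpha> * n0 * n1"
    using assms by (intro add_mono mult_right_mono) auto
  finally show ?thesis by (simp add: algebra_simps)
qed

lemma cov_alg:
  fixes p00 p01 p10 p11 n0 n1 v0 v1 \<alpha> \<beta> q :: real and a0 a1 b0 b1 :: complex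
  assumes nn: "0 \<le> p00" "0 \<le> p01" "0 \<le> p10" "0 \<le> p11" "0 \<le> n0" "0 \<le> n1" "0 \<le> v0" "0 \<le> v1"
    and ab: "cmod a0 \<le> \<alpha> * n0" "cmod a1 \<le> \<alpha> * n1" "cmod b0 \<le> \<beta> * v0" "cmod b1 \<le> \<beta> * v1"
    and pos: "0 \<le> \<alpha>" "0 \<le> \<beta>" "0 \<le> q"
    and D: "0 \<le> p00 * p11 - p01 * p10" "p00 * p11 - p01 * p10 \<le> q * (p00 * p11)"
  defines "Z \<equiv> complex_of_real (p00*n0*v0 + p01*n0*v1 + p10*n1*v0 + p11*n1*v1)"
    and "N12 \<equiv> of_real p00*a0*b0 + of_real p01*a0*b1 + of_real p10*a1*b0 + of_real p11*a1*b1"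
    and "N1 \<equiv> of_real p00*a0* of_real v0 + of_real p01*a0* of_real v1 + of_real p10*a1* of_real v0 + of_real p11*a1* of_real v1"
    and "N2 \<equiv> of_real p00* of_real n0*b0 + of_real p01* of_real n0*b1 + of_real p10* of_real n1*b0 + of_real p11* of_real n1*b1"
  shows "cmod (N12 / Z - (N1 / Z) * (N2 / Z)) \<le> \<alpha> * \<beta> * q"
proof -
  define zr where "zr = p00*n0*v0 + p01*n0*v1 + p10*n1*v0 + p11*n1*v1"
  have Zr: "Z = complex_of_real zr" unfolding Z_def zr_def ..
  have zr0: "0 \<le> zr" unfolding zr_def using nn by simp
  show ?thesis
  proof (cases "zr = 0")
    case True
    then show ?thesis using Zr pos by simp
  next
    case False
    then have zp: "zr > 0" using zr0 by simp
    define \<Delta> where "\<Delta> = p00 * p11 - p01 * p10"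
    have id: "Z * N12 - N1 * N2 = of_real \<Delta> * (a1 * of_real n0 - a0 * of_real n1) * (b1 * of_real v0 - b0 * of_real v1)"
      unfolding Z_def N12_def N1_def N2_def \<Delta>_def
      using cov_identity[of "of_real p00" "of_real n0" "of_real v0" "of_real p01" "of_real v1" "of_real p10" "of_real n1" "of_real p11" a0 b0 b1 a1]
      by (simp add: algebra_simps)
    have "N12 / Z - (N1 / Z) * (N2 / Z) = (Z * N12 - N1 * N2) / Z^2"
      using zp Zr by (simp add: field_simps power2_eq_square)
    have Dn: "0 \<le> \<Delta>" using D(1) by (simp add: \<Delta>_def)
    have "cmod (N12 / Z - (N1 / Z) * (N2 / Z)) = cmod ((Z * N12 - N1 * N2) / Z^2)"
      using \<open>N12 / Z - (N1 / Z) * (N2 / Z) = (Z * N12 - N1 * N2) / Z^2\<close> by simp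
    also have "\<dots> = cmod (of_real \<Delta> * (a1 * of_real n0 - a0 * of_real n1) * (b1 * of_real v0 - b0 * of_real v1) / Z^2)"
      unfolding id ..
    also have "\<dots> = \<Delta> * cmod (a1 * of_real n0 - a0 * of_real n1) * cmod (b1 * of_real v0 - b0 * of_real v1) / zr^2"
      unfolding Zr using Dn zp by (simp add: norm_mult norm_divide norm_power del: of_real_diff of_real_mult)
    also have "\<dots> \<le> \<Delta> * (2 * \<alpha> * n0 * n1) * (2 * \<beta> * v0 * v1) / zr^2"
    proof (rule divide_right_mono)
      have X: "cmod (a1 * of_real n0 - a0 * of_real n1) \<le> 2 * \<alpha> * n0 * n1" by (rule diff_bound[OF nn(5,6) ab(1,2)])
      have Y: "cmod (b1 * of_real v0 - b0 * of_real v1) \<le> 2 * \<beta> * v0 * v1" by (rule diff_bound[OF nn(7,8) ab(3,4)])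
      have A0: "0 \<le> 2 * \<alpha> * n0 * n1" using pos nn by simp
      have "cmod (a1 * of_real n0 - a0 * of_real n1) * cmod (b1 * of_real v0 - b0 * of_real v1) \<le> (2 * \<alpha> * n0 * n1) * (2 * \<beta> * v0 * v1)"
        by (rule mult_mono[OF X Y A0 norm_ge_zero])
      then show "\<Delta> * cmod (a1 * of_real n0 - a0 * of_real n1) * cmod (b1 * of_real v0 - b0 * of_real v1) \<le> \<Delta> * (2 * \<alpha> * n0 * n1) * (2 * \<beta> * v0 * v1)"
        using mult_left_mono[OF _ Dn] by (simp add: mult.assoc)
    qed simp
    also have "\<dots> \<le> (\<alpha> * \<beta> * q) * (4 * (p00 * n0 * v0) * (p11 * n1 * v1)) / zr^2"
    proof (intro divide_right_mono)
      have "\<Delta> * (2 * \<alpha> * n0 * n1) * (2 * \<beta> * v0 * v1) = (\<alpha> * \<beta> * 4 * n0 * n1 * v0 * v1) * \<Delta>" by (simp add: algebra_simps)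
      also have "\<dots> \<le> (\<alpha> * \<beta> * 4 * n0 * n1 * v0 * v1) * (q * (p00 * p11))"
        using D(2) \<Delta>_def nn pos by (intro mult_left_mono) auto
      also have "\<dots> = (\<alpha> * \<beta> * q) * (4 * (p00 * n0 * v0) * (p11 * n1 * v1))" by (simp add: algebra_simps)
      finally show "\<Delta> * (2 * \<alpha> * n0 * n1) * (2 * \<beta> * v0 * v1) \<le> (\<alpha> * \<beta> * q) * (4 * (p00 * n0 * v0) * (p11 * n1 * v1))" .
    qed simp
    also have "\<dots> \<le> (\<alpha> * \<beta> * q) * zr^2 / zr^2"
    proof (intro divide_right_mono mult_left_mono)
      define x where "x = p00 * n0 * v0"
      define y where "y = p11 * n1 * v1"
      have xy: "0 \<le> x" "0 \<le> y" "x + y \<le> zr" unfolding x_def y_def zr_def using nn by auto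
      have "0 \<le> (x - y)^2" by simp
      then have "4 * x * y \<le> (x + y)^2" by (simp add: power2_eq_square algebra_simps)
      also have "\<dots> \<le> zr^2" using xy by (intro power_mono) auto
      finally show "4 * (p00 * n0 * v0) * (p11 * n1 * v1) \<le> zr^2" unfolding x_def y_def by simp
    qed (use pos in auto)
    also have "\<dots> = \<alpha> * \<beta> * q" using zp by simp
    finally show ?thesis .
  qed
qed

lemma tl_len_append: "tl_len (xs @ ys) = tl_len xs + tl_len ys"
  by (simp add: tl_len_def)

lemma sum_UNIV_bool2:
  fixes f :: "bool \<Rightarrow> bool \<Rightarrow> 'a::comm_monoid_add"
  shows "(\<Sum>e1\<in>(UNIV::bool set). \<Sum>e2\<in>(UNIV::bool set). f e1 e2) = f False False + f False True + f True False + f True True"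
  by (simp add: UNIV_bool add.assoc)

definition PhiL :: "complex \<Rightarrow> int \<Rightarrow> tile list \<Rightarrow> bool \<Rightarrow> fvec" where
  "PhiL lam p RL e = (\<lambda>S. \<Sum>l\<in>VV False e RL. if S = cfgS p RL l then wS lam RL l else 0)"

definition PhiR :: "complex \<Rightarrow> int \<Rightarrow> tile list \<Rightarrow> bool \<Rightarrow> fvec" where
  "PhiR lam p RR e = (\<lambda>S. \<Sum>\<rho>\<in>VV e False RR. if S = cfgS p RR \<rho> then wS lam RR \<rho> else 0)"

lemma DL_finner:
  assumes "lkern P X K" "P \<subseteq> \<Lambda>" "finite \<Lambda>" "\<forall>l\<in>VV False e RL. cfgS p RL l \<subseteq> \<Lambda>"
  shows "DL lam p RL P e K = finner \<Lambda> (PhiL lam p RL e) (X (PhiL lam p RL e))"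
proof -
  have B: "\<forall>\<phi> S. S \<subseteq> \<Lambda> \<longrightarrow> X \<phi> S = (\<Sum>T\<in>Pow P. K (S \<inter> P) T * \<phi> ((S - P) \<union> T))"
    using assms(1,3) finite_subset unfolding lkern_def by blast
  show ?thesis
    unfolding DL_def
    by (rule finner_kernel[OF assms(3) finite_VV assms(2) assms(4) B PhiL_def[of lam p RL e], symmetric])
qed

lemma DR_finner:
  assumes "lkern Q X K" "Q \<subseteq> \<Lambda>" "finite \<Lambda>" "\<forall>\<rho>\<in>VV e False RR. cfgS p RR \<rho> \<subseteq> \<Lambda>"
  shows "DR lam p RR Q e K = finner \<Lambda> (PhiR lam p RR e) (X (PhiR lam p RR e))"
proof -
  have B: "\<forall>\<phi> S. S \<subseteq> \<Lambda> \<longrightarrow> X \<phi> S = (\<Sum>T\<in>Pow Q. K (S \<inter> Q) T * \<phi> ((S - Q) \<union> T))"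
    using assms(1,3) finite_subset unfolding lkern_def by blast
  show ?thesis
    unfolding DR_def
    by (rule finner_kernel[OF assms(3) finite_VV assms(2) assms(4) B PhiR_def[of lam p RR e], symmetric])
qed

lemma pB_real: "pB lam B e1 e2 = complex_of_real (\<Sum>\<beta>\<in>VV e1 e2 B. (cmod (wS lam B \<beta>))\<^sup>2)"
  unfolding pB_def of_real_sum by (intro sum.cong refl) (metis complex_norm_square mult.commute)

lemma finner_decomp:
  fixes RL B RR :: "tile list" and a :: int and P Q :: "int set"
  defines "R \<equiv> RL @ B @ RR" and "bs \<equiv> a + tl_len RL" and "br \<equiv> a + tl_len RL + tl_len B"
    and "b \<equiv> a + tl_len (RL @ B @ RR) - 1"
  assumes ne: "RL \<noteq> []" "B \<noteq> []" "RR \<noteq> []" and BM: "set B \<subseteq> {Mono, Void}"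
    and PQ: "P \<subseteq> {a..<bs}" "Q \<subseteq> {br..b}"
    and k: "lkern P X1 K1" "lkern Q X2 K2"
  shows "finner {a..b} (vmd_state lam a R) ((X1 \<circ> X2) (vmd_state lam a R))
       = (\<Sum>e1\<in>UNIV. \<Sum>e2\<in>UNIV. pB lam B e1 e2 * DL lam a RL P e1 K1 * DR lam br RR Q e2 K2)"
proof -
  let ?\<Lambda> = "{a..b}"
  have fP: "finite P" "finite Q" using PQ finite_subset by auto
  have disj: "P \<inter> Q = {}" using PQ tl_len_nonneg[of B] unfolding bs_def br_def by fastforce
  have sub: "P \<union> Q \<subseteq> ?\<Lambda>" using PQ tl_len_nonneg[of B] tl_len_nonneg[of RR] tl_len_nonneg[of RL]
    unfolding bs_def br_def b_def tl_len_append by (force simp: subset_iff)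
  have cfR: "\<forall>v\<in>VS R. cfgS a R v \<subseteq> ?\<Lambda>"
    using cfgS_range unfolding VS_def b_def R_def by fastforce
  have Bk: "\<forall>\<phi> S. S \<subseteq> ?\<Lambda> \<longrightarrow> (X1 \<circ> X2) \<phi> S = (\<Sum>T\<in>Pow (P \<union> Q). (K1 (S \<inter> P) (T \<inter> P) * K2 (S \<inter> Q) (T \<inter> Q)) * \<phi> ((S - (P \<union> Q)) \<union> T))"
  proof (intro allI impI)
    fix \<phi> S assume "S \<subseteq> ?\<Lambda>"
    then have "finite S" using finite_subset by blast
    from lkern_comp[OF k disj fP this] show "(X1 \<circ> X2) \<phi> S = (\<Sum>T\<in>Pow (P \<union> Q). (K1 (S \<inter> P) (T \<inter> P) * K2 (S \<inter> Q) (T \<inter> Q)) * \<phi> ((S - (P \<union> Q)) \<union> T))" .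
  qed
  have fVS: "finite (VS R)" using finite_VV by (simp add: VS_vLR VV_def[symmetric])
  have "finner ?\<Lambda> (vmd_state lam a R) ((X1 \<circ> X2) (vmd_state lam a R)) =
     (\<Sum>ss\<in>VS R. \<Sum>ss'\<in>VS R. cnj (wS lam R ss) * wS lam R ss' *
            (if cfgS a R ss - (P \<union> Q) = cfgS a R ss' - (P \<union> Q)
             then K1 (cfgS a R ss \<inter> P) ((cfgS a R ss' \<inter> (P \<union> Q)) \<inter> P) * K2 (cfgS a R ss \<inter> Q) ((cfgS a R ss' \<inter> (P \<union> Q)) \<inter> Q) else 0))"
    by (rule finner_kernel[OF _ fVS sub cfR Bk vmd_state_eq]) simp
  also have "\<dots> = (\<Sum>ss\<in>VS R. \<Sum>ss'\<in>VS R. cnj (wS lam R ss) * wS lam R ss' *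
            (if cfgS a R ss - (P \<union> Q) = cfgS a R ss' - (P \<union> Q)
             then K1 (cfgS a R ss \<inter> P) (cfgS a R ss' \<inter> P) * K2 (cfgS a R ss \<inter> Q) (cfgS a R ss' \<inter> Q) else 0))"
  proof -
    have "\<And>X. (X \<inter> (P \<union> Q)) \<inter> P = X \<inter> P" "\<And>X. (X \<inter> (P \<union> Q)) \<inter> Q = X \<inter> Q" by auto
    then show ?thesis by (simp only:)
  qed
  also have "\<dots> = (\<Sum>e1\<in>UNIV. \<Sum>e2\<in>UNIV. pB lam B e1 e2 * DL lam a RL P e1 K1 * DR lam br RR Q e2 K2)"
    unfolding R_def br_def
    by (rule master[OF ne BM]) (use PQ in \<open>auto simp: bs_def br_def\<close>)
  finally show ?thesis unfolding R_def .
qed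


lemma omega_cov:
  fixes RL B RR :: "tile list" and a :: int and P Q :: "int set" and q :: real and lam :: complex
  defines "R \<equiv> RL @ B @ RR" and "bs \<equiv> a + tl_len RL" and "br \<equiv> a + tl_len RL + tl_len B"
    and "b \<equiv> a + tl_len (RL @ B @ RR) - 1"
    and "pr \<equiv> (\<lambda>e1 e2. \<Sum>\<beta>\<in>VV e1 e2 B. (cmod (wS lam B \<beta>))\<^sup>2)"
  assumes ne: "RL \<noteq> []" "B \<noteq> []" "RR \<noteq> []" and BM: "set B \<subseteq> {Mono, Void}"
    and PQ: "P \<subseteq> {a..<bs}" "Q \<subseteq> {br..b}"
    and k: "lkern P A1 K1" "lkern Q A2 K2"
    and D: "0 \<le> pr False False * pr True True - pr False True * pr True False"
      "pr False False * pr True True - pr False True * pr True False \<le> q * (pr False False * pr True True)"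
      "0 \<le> q"
  shows "cmod (omega lam a b R (A1 \<circ> A2) - omega lam a b R A1 * omega lam a b R A2)
           \<le> opnorm {a..b} A1 * opnorm {a..b} A2 * q"
proof -
  let ?\<Lambda> = "{a..b}"
  let ?\<psi> = "vmd_state lam a R"
  have fin: "finite ?\<Lambda>" by simp
  have fP: "finite P" "finite Q" using PQ finite_subset by auto
  have PL: "P \<subseteq> ?\<Lambda>" "Q \<subseteq> ?\<Lambda>" using PQ tl_len_nonneg[of B] tl_len_nonneg[of RR] tl_len_nonneg[of RL]
    unfolding bs_def br_def b_def tl_len_append by (force simp: subset_iff)+
  have idP: "lkern P id idK" and idQ: "lkern Q id idK" using lkern_id fP by auto
  note fd = finner_decomp[OF ne BM PQ[unfolded bs_def br_def b_def], folded R_def br_def b_def]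
  have rL: "\<forall>l\<in>VV False e RL. cfgS a RL l \<subseteq> ?\<Lambda>" for e
    using cfgS_range_vLR tl_len_nonneg[of B] tl_len_nonneg[of RR]
    unfolding VV_def b_def tl_len_append by fastforce
  have rR: "\<forall>\<rho>\<in>VV e False RR. cfgS br RR \<rho> \<subseteq> ?\<Lambda>" for e
    using cfgS_range_vLR tl_len_nonneg[of B] tl_len_nonneg[of RL]
    unfolding VV_def b_def br_def tl_len_append by fastforce
  define nL where "nL e = (fnorm ?\<Lambda> (PhiL lam a RL e))\<^sup>2" for e
  define nR where "nR e = (fnorm ?\<Lambda> (PhiR lam br RR e))\<^sup>2" for e
  define aL where "aL e = DL lam a RL P e K1" for e
  define bR where "bR e = DR lam br RR Q e K2" for e
  have DLid: "DL lam a RL P e idK = of_real (nL e)" for e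
    unfolding DL_finner[OF idP PL(1) fin rL] nL_def using finner_self[OF fin] by simp
  have DRid: "DR lam br RR Q e idK = of_real (nR e)" for e
    unfolding DR_finner[OF idQ PL(2) fin rR] nR_def using finner_self[OF fin] by simp
  have aLb: "cmod (aL e) \<le> opnorm ?\<Lambda> A1 * nL e" for e
    unfolding aL_def DL_finner[OF k(1) PL(1) fin rL] nL_def by (rule expect_bound[OF k(1) PL(1) fin])
  have bRb: "cmod (bR e) \<le> opnorm ?\<Lambda> A2 * nR e" for e
    unfolding bR_def DR_finner[OF k(2) PL(2) fin rR] nR_def by (rule expect_bound[OF k(2) PL(2) fin])
  have pBr: "pB lam B e1 e2 = of_real (pr e1 e2)" for e1 e2 unfolding pr_def by (rule pB_real)
  have nn: "0 \<le> nL e" "0 \<le> nR e" "0 \<le> pr e1 e2" for e e1 e2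
    unfolding nL_def nR_def pr_def by (auto intro: sum_nonneg)
  have o1: "0 \<le> opnorm ?\<Lambda> A1" by (rule opnorm_nonneg[OF k(1) PL(1) fin])
  have o2: "0 \<le> opnorm ?\<Lambda> A2" by (rule opnorm_nonneg[OF k(2) PL(2) fin])
  have Zs: "finner ?\<Lambda> ?\<psi> ?\<psi> = of_real (pr False False * nL False * nR False + pr False True * nL False * nR True
      + pr True False * nL True * nR False + pr True True * nL True * nR True)"
    using fd[OF idP idQ] by (simp add: sum_UNIV_bool2 DLid DRid pBr)
  have N12: "finner ?\<Lambda> ?\<psi> ((A1 \<circ> A2) ?\<psi>) = of_real (pr False False) * aL False * bR False + of_real (pr False True) * aL False * bR True
      + of_real (pr True False) * aL True * bR False + of_real (pr True True) * aL True * bR True"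
    using fd[OF k] by (simp add: sum_UNIV_bool2 pBr aL_def bR_def)
  have N1: "finner ?\<Lambda> ?\<psi> (A1 ?\<psi>) = of_real (pr False False) * aL False * of_real (nR False) + of_real (pr False True) * aL False * of_real (nR True)
      + of_real (pr True False) * aL True * of_real (nR False) + of_real (pr True True) * aL True * of_real (nR True)"
    using fd[OF k(1) idQ] by (simp add: sum_UNIV_bool2 pBr aL_def DRid)
  have N2: "finner ?\<Lambda> ?\<psi> (A2 ?\<psi>) = of_real (pr False False) * of_real (nL False) * bR False + of_real (pr False True) * of_real (nL False) * bR True
      + of_real (pr True False) * of_real (nL True) * bR False + of_real (pr True True) * of_real (nL True) * bR True"
    using fd[OF idP k(2)] by (simp add: sum_UNIV_bool2 pBr bR_def DLid)
  show ?thesis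
    unfolding omega_def Zs N12 N1 N2
    by (rule cov_alg[OF nn(3) nn(3) nn(3) nn(3) nn(1) nn(1) nn(2) nn(2) aLb aLb bRb bRb o1 o2 D(3) D(1) D(2)])
qed


definition prB :: "complex \<Rightarrow> tile list \<Rightarrow> bool \<Rightarrow> bool \<Rightarrow> real" where
  "prB lam B e1 e2 = (\<Sum>\<beta>\<in>VV e1 e2 B. (cmod (wS lam B \<beta>))\<^sup>2)"

lemma VV_Void: "VV False False [Void] = {[SF]}" "VV False True [Void] = {}" "VV True e [Void] = {}"
  by (auto simp: VV_def vLR_def vR_single)

lemma prB_Void: "prB lam [Void] False False = 1" "prB lam [Void] False True = 0" "prB lam [Void] True e = 0"
  by (simp_all add: prB_def VV_Void tw_def tile_weight_def)

lemma VV_Mono: "VV False False [Mono] = {[SF]}" "VV False True [Mono] = {[SR]}"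
  "VV True False [Mono] = {[SL]}" "VV True True [Mono] = {}"
  by (auto simp: VV_def vLR_def vR_single vR_nil)

lemma prB_Mono1: "prB lam [Mono] False False = 1" "prB lam [Mono] False True = (cmod lam)\<^sup>2"
  "prB lam [Mono] True False = 1" "prB lam [Mono] True True = 0"
  by (simp_all add: prB_def VV_Mono tw_def tile_weight_def)

lemma prB_step:
  assumes "xs \<noteq> []"
  shows "prB lam (xs @ [Mono]) e1 e2 = (\<Sum>e'\<in>UNIV. prB lam xs e1 e' * prB lam [Mono] e' e2)"
proof -
  have "prB lam (xs @ [Mono]) e1 e2 = (\<Sum>e'\<in>UNIV. \<Sum>s1\<in>VV e1 e' xs. \<Sum>s2\<in>VV e' e2 [Mono]. (cmod (wS lam (xs @ [Mono]) (s1 @ s2)))\<^sup>2)"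
    unfolding prB_def by (rule sum_split[OF assms]) simp
  also have "\<dots> = (\<Sum>e'\<in>UNIV. \<Sum>s1\<in>VV e1 e' xs. \<Sum>s2\<in>VV e' e2 [Mono]. (cmod (wS lam xs s1))\<^sup>2 * (cmod (wS lam [Mono] s2))\<^sup>2)"
  proof (intro sum.cong refl)
    fix e' s1 s2 assume "s1 \<in> VV e1 e' xs"
    then have "length s1 = length xs" using vLR_length by (auto simp: VV_def)
    then show "(cmod (wS lam (xs @ [Mono]) (s1 @ s2)))\<^sup>2 = (cmod (wS lam xs s1))\<^sup>2 * (cmod (wS lam [Mono] s2))\<^sup>2"
      by (simp add: wS_append norm_mult power_mult_distrib)
  qed
  also have "\<dots> = (\<Sum>e'\<in>UNIV. prB lam xs e1 e' * prB lam [Mono] e' e2)"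
    unfolding prB_def by (simp only: sum_product)
  finally show ?thesis .
qed

fun fibt :: "real \<Rightarrow> nat \<Rightarrow> real" where
  "fibt t 0 = 1"
| "fibt t (Suc 0) = 1"
| "fibt t (Suc (Suc n)) = fibt t (Suc n) + t * fibt t n"

fun fm :: "real \<Rightarrow> nat \<Rightarrow> real" where
  "fm t 0 = 0"
| "fm t (Suc k) = fibt t k"

lemma fibt_fm: "fibt t k + t * fm t k = fibt t (Suc k)"
  by (cases k) auto

lemma prB_rep:
  fixes lam :: complex
  defines "t \<equiv> (cmod lam)\<^sup>2"
  shows "prB lam (replicate (Suc k) Mono) False False = fibt t (Suc k) \<and>
         prB lam (replicate (Suc k) Mono) False True = t * fibt t k \<and>
         prB lam (replicate (Suc k) Mono) True False = fibt t k \<and>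
         prB lam (replicate (Suc k) Mono) True True = t * fm t k"
proof (induction k)
  case 0
  then show ?case using prB_Mono1[of lam] by (simp add: t_def)
next
  case (Suc k)
  have r: "replicate (Suc (Suc k)) Mono = replicate (Suc k) Mono @ [Mono]"
    by (simp add: replicate_append_same)
  have st: "prB lam (replicate (Suc (Suc k)) Mono) e1 e2 =
      prB lam (replicate (Suc k) Mono) e1 False * prB lam [Mono] False e2 +
      prB lam (replicate (Suc k) Mono) e1 True * prB lam [Mono] True e2" for e1 e2
    unfolding r by (subst prB_step) (simp_all add: UNIV_bool)
  show ?case
    using Suc.IH fibt_fm[of t k] unfolding st by (simp add: prB_Mono1 t_def[symmetric] algebra_simps)
qed

lemma fibt_cassini: "fibt t (Suc (Suc n)) * fibt t n - (fibt t (Suc n))\<^sup>2 = t * (- t) ^ n"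
proof (induction n)
  case 0
  then show ?case by (simp add: power2_eq_square)
next
  case (Suc n)
  have "fibt t (Suc (Suc (Suc n))) * fibt t (Suc n) - (fibt t (Suc (Suc n)))\<^sup>2
      = - t * (fibt t (Suc (Suc n)) * fibt t n - (fibt t (Suc n))\<^sup>2)"
    by (simp add: power2_eq_square algebra_simps)
  then show ?case using Suc.IH by simp
qed

lemma pow_rec:
  fixes w t :: real
  assumes "w^2 = w + t"
  shows "w ^ (Suc (Suc (Suc k))) = w ^ (Suc (Suc k)) + t * w ^ (Suc k)"
proof -
  have "w ^ (Suc (Suc (Suc k))) = w ^ (Suc k) * w^2" by (simp add: power2_eq_square mult_ac)
  also have "\<dots> = w ^ (Suc (Suc k)) + t * w ^ (Suc k)" unfolding assms by (simp add: algebra_simps)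
  finally show ?thesis .
qed

lemma fibt_closed:
  fixes t :: real
  assumes "0 \<le> t"
  defines "s \<equiv> sqrt (1 + 4 * t)"
  defines "\<mu> \<equiv> (1 + s) / 2" and "\<nu> \<equiv> (s - 1) / 2"
  shows "s * fibt t n = \<mu> ^ (Suc n) - (- \<nu>) ^ (Suc n)"
proof -
  have s2: "s\<^sup>2 = 1 + 4 * t" unfolding s_def using assms by simp
  have m2': "\<mu>^2 - (\<mu> + t) = (s\<^sup>2 - (1 + 4 * t)) / 4" unfolding \<mu>_def by (simp add: power2_eq_square field_simps)
  have m2: "\<mu>^2 = \<mu> + t" using m2' s2 by simp
  have n2': "(- \<nu>)^2 - ((- \<nu>) + t) = (s\<^sup>2 - (1 + 4 * t)) / 4" unfolding \<nu>_def by (simp add: power2_eq_square field_simps)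
  have n2: "(- \<nu>)^2 = (- \<nu>) + t" using n2' s2 by simp
  have mk: "\<mu> ^ (Suc (Suc (Suc k))) = \<mu> ^ (Suc (Suc k)) + t * \<mu> ^ (Suc k)" for k
    by (rule pow_rec[OF m2])
  have nk: "(- \<nu>) ^ (Suc (Suc (Suc k))) = (- \<nu>) ^ (Suc (Suc k)) + t * (- \<nu>) ^ (Suc k)" for k
    by (rule pow_rec[OF n2])
  have "s * fibt t n = \<mu> ^ (Suc n) - (- \<nu>) ^ (Suc n) \<and> s * fibt t (Suc n) = \<mu> ^ (Suc (Suc n)) - (- \<nu>) ^ (Suc (Suc n))"
  proof (induction n)
    case 0
    have mn: "\<mu> + \<nu> = s" unfolding \<mu>_def \<nu>_def by (simp add: field_simps)
    have "s * 1 = \<mu> - (- \<nu>)" using mn by simp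
    moreover have "s * 1 = \<mu>^2 - (- \<nu>)^2" using m2 n2 mn by simp
    ultimately show ?case by (simp add: power2_eq_square)
  next
    case (Suc n)
    have "s * fibt t (Suc (Suc n)) = s * fibt t (Suc n) + t * (s * fibt t n)" by (simp add: algebra_simps)
    also have "\<dots> = \<mu> ^ (Suc (Suc (Suc n))) - (- \<nu>) ^ (Suc (Suc (Suc n)))"
      using Suc.IH mk[of n] nk[of n] by (simp add: algebra_simps)
    finally show ?case using Suc.IH by simp
  qed
  then show ?thesis by simp
qed


lemma fibt_lower:
  fixes t :: real
  assumes "0 \<le> t" "even n"
  defines "s \<equiv> sqrt (1 + 4 * t)"
  defines "\<mu> \<equiv> (1 + s) / 2" and "\<nu> \<equiv> (s - 1) / 2"
  shows "\<mu> ^ (Suc n) \<le> s * fibt t n"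
proof -
  have "s \<ge> 1" unfolding s_def using assms(1) by simp
  then have "\<nu> \<ge> 0" unfolding \<nu>_def by simp
  have "(- \<nu>) ^ (Suc n) = - (\<nu> ^ (Suc n))" using assms(2) by simp
  moreover have "0 \<le> \<nu> ^ (Suc n)" using \<open>\<nu> \<ge> 0\<close> by simp
  moreover have "s * fibt t n = \<mu> ^ Suc n - (- \<nu>) ^ Suc n"
    unfolding s_def \<mu>_def \<nu>_def by (rule fibt_closed[OF assms(1)])
  ultimately show ?thesis by linarith
qed

lemma mono_block_bound:
  fixes lam :: complex and j :: nat
  assumes "lam \<noteq> 0" "even j"
  defines "t \<equiv> (cmod lam)\<^sup>2"
  defines "s \<equiv> sqrt (1 + 4 * t)"
  defines "r \<equiv> (s - 1) / (s + 1)"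
  defines "B \<equiv> replicate (Suc (Suc j)) Mono"
  shows "0 \<le> prB lam B False False * prB lam B True True - prB lam B False True * prB lam B True False"
    "prB lam B False False * prB lam B True True - prB lam B False True * prB lam B True False
       \<le> (4 * r ^ (Suc j)) * (prB lam B False False * prB lam B True True)"
proof -
  define m where "m = Suc (Suc j)"
  define \<mu> where "\<mu> = (1 + s) / 2"
  define \<nu> where "\<nu> = (s - 1) / 2"
  have tpos: "t > 0" unfolding t_def using assms(1) by simp
  have s1: "s > 1" unfolding s_def using tpos by simp
  have mpos: "\<mu> > 0" "\<nu> > 0" unfolding \<mu>_def \<nu>_def using s1 by auto
  have s2: "s\<^sup>2 = 1 + 4 * t" unfolding s_def using tpos by simp
  have mn: "\<mu> * \<nu> = t" unfolding \<mu>_def \<nu>_def using s2 by (simp add: power2_eq_square field_simps)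
  have rr: "r = \<nu> / \<mu>" unfolding r_def \<mu>_def \<nu>_def using s1 by (simp add: field_simps)
  have s2m: "s \<le> 2 * \<mu>" unfolding \<mu>_def by simp
  have P: "prB lam B False False = fibt t m" "prB lam B False True = t * fibt t (Suc j)"
     "prB lam B True False = fibt t (Suc j)" "prB lam B True True = t * fibt t j"
    using prB_rep[of lam "Suc j"] unfolding B_def m_def t_def by simp_all
  have cas: "fibt t m * fibt t j - (fibt t (Suc j))\<^sup>2 = t * t ^ j"
  proof -
    have ev: "(- t) ^ j = t ^ j" using assms(2) by simp
    have "fibt t (Suc (Suc j)) * fibt t j - (fibt t (Suc j))\<^sup>2 = t * (- t) ^ j" by (rule fibt_cassini)
    then show ?thesis unfolding m_def ev .
  qed
  have D: "prB lam B False False * prB lam B True True - prB lam B False True * prB lam B True False = t ^ m"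
  proof -
    have "prB lam B False False * prB lam B True True - prB lam B False True * prB lam B True False
        = t * (fibt t m * fibt t j - (fibt t (Suc j))\<^sup>2)" unfolding P by (simp add: power2_eq_square algebra_simps)
    also have "\<dots> = t * (t * t ^ j)" by (simp only: cas)
    also have "\<dots> = t ^ m" unfolding m_def by simp
    finally show ?thesis .
  qed
  show "0 \<le> prB lam B False False * prB lam B True True - prB lam B False True * prB lam B True False"
    unfolding D using tpos by simp
  have F1: "\<mu> ^ (Suc m) \<le> s * fibt t m" unfolding \<mu>_def s_def m_def
    by (rule fibt_lower) (use tpos assms(2) in auto)
  have F2: "\<mu> ^ (Suc j) \<le> s * fibt t j" unfolding \<mu>_def s_def
    by (rule fibt_lower) (use tpos assms(2) in auto)
  have key: "t ^ m * (s\<^sup>2 * \<mu> ^ (Suc j)) \<le> (4 * \<nu> ^ (Suc j) * t) * ((s * fibt t m) * (s * fibt t j))"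
  proof -
    have "t ^ m * (s\<^sup>2 * \<mu> ^ (Suc j)) = (\<mu> ^ m * \<nu> ^ m) * (s\<^sup>2 * \<mu> ^ (Suc j))"
      unfolding mn[symmetric] by (simp add: power_mult_distrib)
    also have "\<dots> \<le> (\<mu> ^ m * \<nu> ^ m) * ((2 * \<mu>)\<^sup>2 * \<mu> ^ (Suc j))"
      using s2m s1 mpos by (intro mult_left_mono mult_right_mono power_mono) auto
    also have "\<dots> = (4 * \<nu> ^ (Suc j) * t) * (\<mu> ^ (Suc m) * \<mu> ^ (Suc j))"
      unfolding mn[symmetric] m_def by (simp add: power2_eq_square algebra_simps)
    also have "\<dots> \<le> (4 * \<nu> ^ (Suc j) * t) * ((s * fibt t m) * (s * fibt t j))"
    proof -
      have "0 < \<mu> ^ (Suc m)" using mpos by simp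
      then have "0 \<le> s * fibt t m" using F1 by linarith
      then show ?thesis using F1 F2 mpos tpos by (intro mult_left_mono mult_mono) auto
    qed
    finally show ?thesis .
  qed
  have pos2: "s\<^sup>2 * \<mu> ^ (Suc j) > 0" using s1 mpos by simp
  have "t ^ m \<le> (4 * \<nu> ^ (Suc j) * t) * (s * fibt t m) * (s * fibt t j) / (s\<^sup>2 * \<mu> ^ (Suc j))"
    using key pos2 by (simp add: le_divide_eq mult.assoc)
  also have "\<dots> = (4 * r ^ (Suc j)) * (fibt t m * (t * fibt t j))"
    unfolding rr using mpos s1 by (simp add: power_divide power2_eq_square field_simps)
  finally have X: "t ^ m \<le> (4 * r ^ (Suc j)) * (fibt t m * (t * fibt t j))" .
  show "prB lam B False False * prB lam B True True - prB lam B False True * prB lam B True False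
       \<le> (4 * r ^ (Suc j)) * (prB lam B False False * prB lam B True True)"
    by (subst D) (simp only: P(1) P(4) X)
qed


lemma root_tile_cases:
  assumes "root_tiling a b R" "i < length R"
  shows "R ! i \<in> {Void, Mono} \<or> (i = 0 \<and> R ! i = LDimer) \<or> (i = length R - 1 \<and> R ! i \<in> {RDimer, RMono1, RMono2})"
  using assms unfolding root_tiling_def by blast

lemma root_tlen: "root_tiling a b R \<Longrightarrow> tl_len R = b - a + 1"
  unfolding root_tiling_def tl_len_def by simp

lemma root_tile_len: "root_tiling a b R \<Longrightarrow> i < length R \<Longrightarrow> tlen (R ! i) \<le> 5"
  using root_tile_cases[of a b R i] by (auto simp: tlen_def)

lemma tl_len_take_Suc: "i < length R \<Longrightarrow> tl_len (take (Suc i) R) = tl_len (take i R) + int (tlen (R ! i))"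
  by (simp add: take_Suc_conv_app_nth tl_len_append tl_len_def)

lemma block_exists:
  fixes a b p2 q1 :: int
  assumes rt: "root_tiling a b R" and h: "a \<le> p2" "p2 + 20 \<le> q1" "q1 \<le> b"
  defines "m \<equiv> 2 * nat ((q1 - p2 - 5) div 6)"
  shows "\<exists>RL B RR. R = RL @ B @ RR \<and> RL \<noteq> [] \<and> RR \<noteq> [] \<and> p2 < a + tl_len RL \<and>
            a + tl_len RL + tl_len B \<le> q1 \<and> (B = [Void] \<or> B = replicate m Mono)"
proof -
  define n where "n = length R"
  define pos where "pos i = a + tl_len (take i R)" for i
  have posn: "pos i = b + 1" if "n \<le> i" for i
    using that root_tlen[OF rt] unfolding pos_def n_def by simp
  have posS: "pos (Suc i) = pos i + int (tlen (R ! i))" if "i < n" for i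
    using tl_len_take_Suc[of i R] that unfolding pos_def n_def by simp
  have dd: "6 * ((q1 - p2 - 5) div 6) \<le> q1 - p2 - 5"
    using pos_mod_sign[of 6 "q1 - p2 - 5"] div_mult_mod_eq[of "q1 - p2 - 5" 6] by linarith
  have d0: "0 \<le> (q1 - p2 - 5) div 6" using h by simp
  have m3: "3 * int m \<le> q1 - p2 - 5" unfolding m_def using dd d0 by simp
  have "p2 < pos n" using posn[of n] h by simp
  then have ex: "\<exists>i. p2 < pos i" by blast
  define j0 where "j0 = (LEAST i. p2 < pos i)"
  have j0: "p2 < pos j0" unfolding j0_def by (rule LeastI_ex[OF ex])
  have j0n: "j0 \<le> n" unfolding j0_def using posn[of n] h by (intro Least_le) auto
  have "pos 0 = a" unfolding pos_def by (simp add: tl_len_def)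
  then have j0pos: "j0 \<noteq> 0" using j0 h by (metis not_less)
  have prev: "pos (j0 - 1) \<le> p2" using not_less_Least[of "j0 - 1" "\<lambda>i. p2 < pos i"] j0pos unfolding j0_def by fastforce
  have "j0 - 1 < n" using j0n j0pos by simp
  then have "pos j0 = pos (j0 - 1) + int (tlen (R ! (j0 - 1)))" using posS[of "j0 - 1"] j0pos by simp
  moreover have "tlen (R ! (j0 - 1)) \<le> 5" using root_tile_len[OF rt] \<open>j0 - 1 < n\<close> by (simp add: n_def)
  ultimately have pj0: "pos j0 \<le> p2 + 5" using prev by simp
  have run: "(\<forall>i<k. R ! (j0 + i) = Mono) \<longrightarrow> j0 + k \<le> n \<and> pos (j0 + k) = pos j0 + 3 * int k" if "k \<le> m" for k
    using that
  proof (induction k)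
    case 0
    then show ?case using j0n by simp
  next
    case (Suc k)
    show ?case
    proof
      assume mono: "\<forall>i<Suc k. R ! (j0 + i) = Mono"
      from Suc have IH: "j0 + k \<le> n" "pos (j0 + k) = pos j0 + 3 * int k" using mono by auto
      have "pos (j0 + k) \<le> q1 - 3" using IH(2) pj0 m3 Suc.prems by simp
      then have lt: "j0 + k < n" using IH(1) posn[of "j0 + k"] h by fastforce
      have "pos (Suc (j0 + k)) = pos (j0 + k) + 3" using posS[OF lt] mono by (simp add: tlen_def)
      then show "j0 + Suc k \<le> n \<and> pos (j0 + Suc k) = pos j0 + 3 * int (Suc k)" using lt IH by simp
    qed
  qed
  have tile: "j0 + k < n \<and> R ! (j0 + k) \<in> {Void, Mono}" if "k < m" "\<forall>i<k. R ! (j0 + i) = Mono" for k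
  proof -
    have r: "j0 + k \<le> n" "pos (j0 + k) = pos j0 + 3 * int k" using run[of k] that by auto
    have pk: "pos (j0 + k) \<le> q1 - 3" using r(2) pj0 m3 that(1) by simp
    then have lt: "j0 + k < n" using r(1) posn[of "j0 + k"] h by fastforce
    have "R ! (j0 + k) \<in> {Void, Mono}"
    proof (rule ccontr)
      assume nv: "R ! (j0 + k) \<notin> {Void, Mono}"
      have "j0 + k = n - 1 \<and> R ! (j0 + k) \<in> {RDimer, RMono1, RMono2}"
        using root_tile_cases[OF rt, of "j0 + k"] lt nv j0pos by (auto simp: n_def)
      then have "tlen (R ! (j0 + k)) \<le> 3" and e: "Suc (j0 + k) = n" using lt by (auto simp: tlen_def)
      then have "pos n \<le> q1" using posS[OF lt] pk e by simp
      then show False using posn[of n] h by simp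
    qed
    then show ?thesis using lt by simp
  qed
  show ?thesis
  proof (cases "\<exists>k<m. R ! (j0 + k) \<noteq> Mono")
    case True
    define k where "k = (LEAST k. k < m \<and> R ! (j0 + k) \<noteq> Mono)"
    have k: "k < m" "R ! (j0 + k) \<noteq> Mono" using LeastI_ex[of "\<lambda>k. k < m \<and> R ! (j0 + k) \<noteq> Mono"] True
      unfolding k_def by auto
    have before: "\<forall>i<k. R ! (j0 + i) = Mono"
      using not_less_Least[of _ "\<lambda>k. k < m \<and> R ! (j0 + k) \<noteq> Mono"] k(1) unfolding k_def by fastforce
    have t: "j0 + k < n" "R ! (j0 + k) = Void" using tile[OF k(1) before] k(2) by auto
    have r: "pos (j0 + k) = pos j0 + 3 * int k" using run[of k] k(1) before by auto
    have pk: "pos (j0 + k) \<le> q1 - 3" using r pj0 m3 k(1) by simp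
    have ps: "pos (Suc (j0 + k)) = pos (j0 + k) + 1" using posS[OF t(1)] t(2) by (simp add: tlen_def)
    have lt2: "Suc (j0 + k) < n"
    proof (rule ccontr)
      assume "\<not> Suc (j0 + k) < n"
      then have "pos (Suc (j0 + k)) = b + 1" using posn by simp
      then show False using ps pk h by simp
    qed
    define RL where "RL = take (j0 + k) R"
    define RR where "RR = drop (Suc (j0 + k)) R"
    have R: "R = RL @ [Void] @ RR" using id_take_nth_drop[OF t(1)[unfolded n_def]] t(2) unfolding RL_def RR_def by simp
    have "RL \<noteq> []" using j0pos t(1) unfolding RL_def n_def by (cases R) auto
    moreover have "RR \<noteq> []" using lt2 unfolding RR_def n_def by simp
    moreover have "p2 < a + tl_len RL" using j0 r unfolding RL_def pos_def[symmetric] by simp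
    moreover have "a + tl_len RL + tl_len [Void] \<le> q1" using pk unfolding RL_def pos_def[symmetric] by (simp add: tl_len_def tlen_def)
    ultimately show ?thesis using R by blast
  next
    case False
    then have allm: "\<forall>i<m. R ! (j0 + i) = Mono" by auto
    have r: "j0 + m \<le> n" "pos (j0 + m) = pos j0 + 3 * int m" using run[of m] allm by auto
    have pm: "pos (j0 + m) \<le> q1" using r(2) pj0 m3 by simp
    have lt: "j0 + m < n"
    proof (rule ccontr)
      assume "\<not> j0 + m < n"
      then have "pos (j0 + m) = b + 1" using posn by simp
      then show False using pm h by simp
    qed
    define RL where "RL = take j0 R"
    define B where "B = take m (drop j0 R)"
    define RR where "RR = drop (j0 + m) R"
    have R: "R = RL @ B @ RR" unfolding RL_def B_def RR_def
      by (metis append_take_drop_id drop_drop add.commute)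
    have B: "B = replicate m Mono"
    proof (rule nth_equalityI)
      show "length B = length (replicate m Mono)" using r(1) unfolding B_def n_def by simp
      fix i assume "i < length B"
      then have "i < m" using r(1) unfolding B_def n_def by simp
      then show "B ! i = replicate m Mono ! i" using allm r(1) unfolding B_def n_def by simp
    qed
    have tk: "tl_len (take (j0 + m) R) = tl_len RL + tl_len B"
      unfolding RL_def B_def by (simp add: take_add tl_len_append)
    have "RL \<noteq> []" using j0pos j0n lt unfolding RL_def n_def by (cases R) auto
    moreover have "RR \<noteq> []" using lt unfolding RR_def n_def by simp
    moreover have "p2 < a + tl_len RL" using j0 unfolding RL_def pos_def by simp
    moreover have "a + tl_len RL + tl_len B \<le> q1" using pm tk unfolding pos_def by simp
    ultimately show ?thesis using R B by blast
  qed
qed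


lemma card_Int_eq:
  assumes "finite A" "finite A'" "card A = card A'" "A - P = A' - P"
  shows "card (A \<inter> P) = card (A' \<inter> P)"
proof -
  have "card A = card (A \<inter> P) + card (A - P)" using assms(1) card_Int_Diff by blast
  moreover have "card A' = card (A' \<inter> P) + card (A' - P)" using assms(2) card_Int_Diff by blast
  ultimately show ?thesis using assms(3,4) by simp
qed

lemma card_local:
  fixes RL B RR :: "tile list" and a :: int and P Q :: "int set"
  defines "R \<equiv> RL @ B @ RR" and "bs \<equiv> a + tl_len RL" and "br \<equiv> a + tl_len RL + tl_len B"
  assumes ne: "RL \<noteq> []" "B \<noteq> []" "RR \<noteq> []" and BM: "set B \<subseteq> {Mono, Void}"
    and PQ: "P \<subseteq> {..<bs}" "Q \<subseteq> {br..}"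
    and ss: "ss \<in> VS R" "ss' \<in> VS R"
    and eq: "cfgS a R ss - (P \<union> Q) = cfgS a R ss' - (P \<union> Q)"
  shows "card (cfgS a R ss \<inter> P) = card (cfgS a R ss' \<inter> P) \<and> card (cfgS a R ss \<inter> Q) = card (cfgS a R ss' \<inter> Q)"
proof -
  define cL where "cL l = cfgS a RL l" for l
  define cB where "cB \<beta> = cfgS bs B \<beta>" for \<beta>
  define cR where "cR \<rho> = cfgS br RR \<rho>" for \<rho>
  have cf: "cfgS a R (l @ \<beta> @ \<rho>) = cL l \<union> cB \<beta> \<union> cR \<rho>"
    if "l \<in> VV False e1 RL" "\<beta> \<in> VV e1 e2 B" for l \<beta> \<rho> e1 e2
  proof -
    have ll: "length l = length RL" "length \<beta> = length B" using that vLR_length by (auto simp: VV_def)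
    show ?thesis
      unfolding R_def cfgS_append[OF ll(1)] cfgS_append[OF ll(2)] cL_def cB_def cR_def bs_def br_def
      by (simp add: add.assoc Un_assoc)
  qed
  have rng: "cL l \<subseteq> {..<bs}" "cB \<beta> \<subseteq> {bs..<br}" "cR \<rho> \<subseteq> {br..}"
    if "l \<in> VV False e1 RL" "\<beta> \<in> VV e1 e2 B" "\<rho> \<in> VV e2 False RR" for l \<beta> \<rho> e1 e2
    using that cfgS_range_vLR unfolding cL_def cB_def cR_def VV_def bs_def br_def by fastforce+
  have uv: "bs \<le> br" unfolding bs_def br_def using tl_len_nonneg[of B] by simp
  obtain e1 e2 l \<beta> \<rho> where d: "ss = l @ \<beta> @ \<rho>" "l \<in> VV False e1 RL" "\<beta> \<in> VV e1 e2 B" "\<rho> \<in> VV e2 False RR"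
    using vs_decomp[OF ne ss(1)[unfolded R_def]] by blast
  obtain e1' e2' l' \<beta>' \<rho>' where d': "ss' = l' @ \<beta>' @ \<rho>'" "l' \<in> VV False e1' RL" "\<beta>' \<in> VV e1' e2' B" "\<rho>' \<in> VV e2' False RR"
    using vs_decomp[OF ne ss(2)[unfolded R_def]] by blast
  note r = rng[OF d(2-4)] and r' = rng[OF d'(2-4)]
  note s1 = set3[OF r(1,2,3) PQ uv] and s2 = set3[OF r'(1,2,3) PQ uv]
  have E: "cL l - P = cL l' - P \<and> cB \<beta> = cB \<beta>' \<and> cR \<rho> - Q = cR \<rho>' - Q"
  proof -
    have "(cL l - P) \<union> cB \<beta> \<union> (cR \<rho> - Q) = (cL l' - P) \<union> cB \<beta>' \<union> (cR \<rho>' - Q)"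
      using eq unfolding d d' cf[OF d(2,3)] cf[OF d'(2,3)] s1 s2 .
    then show ?thesis by (subst (asm) union3_eq[where u=bs and v=br]) (use r r' uv in auto)
  qed
  have "\<beta> = \<beta>'" using cfgS_inj[OF vLR_okst vLR_okst BM] E d(3) d'(3) unfolding cB_def VV_def by blast
  then have ee: "e1 = e1'" "e2 = e2'" using vLR_flags_unique[of e1 e2 B \<beta> e1' e2'] d(3) d'(3) ne(2) by (auto simp: VV_def)
  have cl: "card (cL l) = card (cL l')"
    using card_cfg[of False e1 RL l a] card_cfg[of False e1' RL l' a] d(2) d'(2) ee unfolding VV_def cL_def by simp
  have cr: "card (cR \<rho>) = card (cR \<rho>')"
    using card_cfg[of e2 False RR \<rho> br] card_cfg[of e2' False RR \<rho>' br] d(4) d'(4) ee unfolding VV_def cR_def by simp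
  have "card (cL l \<inter> P) = card (cL l' \<inter> P)"
    using card_Int_eq[OF finite_cfgS finite_cfgS, of a RL l a RL l'] cl E unfolding cL_def by blast
  moreover have "card (cR \<rho> \<inter> Q) = card (cR \<rho>' \<inter> Q)"
    using card_Int_eq[OF finite_cfgS finite_cfgS, of br RR \<rho> br RR \<rho>'] cr E unfolding cR_def by blast
  ultimately show ?thesis unfolding d d' cf[OF d(2,3)] cf[OF d'(2,3)] s1 s2 by simp
qed

lemma card_total: "ss \<in> VS R \<Longrightarrow> card (cfgS p R ss) = nb R"
  using card_cfg[of False False R ss p] by (simp add: VS_vLR)

lemma word_zero:
  assumes fin: "finite \<Lambda>" and Z: "Z \<subseteq> \<Lambda>" and XZ: "X \<subseteq> Z" and w: "word_in Z w" "odd (nX X w)"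
    and fV: "finite V" and cf: "\<forall>v\<in>V. cf v \<subseteq> \<Lambda>"
    and \<psi>: "\<psi> = (\<lambda>S. \<Sum>v\<in>V. if S = cf v then wt v else 0)"
    and key: "\<And>v v'. v \<in> V \<Longrightarrow> v' \<in> V \<Longrightarrow> cf v - Z = cf v' - Z \<Longrightarrow> card (cf v \<inter> X) = card (cf v' \<inter> X)"
  shows "finner \<Lambda> \<psi> (op_word w \<psi>) = 0"
proof -
  have fZ: "finite Z" using fin Z finite_subset by blast
  have fX: "finite X" using fZ XZ finite_subset by blast
  have B: "\<forall>\<phi> S. S \<subseteq> \<Lambda> \<longrightarrow> op_word w \<phi> S = (\<Sum>T\<in>Pow Z. gk Z w S T * \<phi> ((S - Z) \<union> T))"
    using word_general[OF fZ w(1)] by blast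
  have "finner \<Lambda> \<psi> (op_word w \<psi>) = (\<Sum>v\<in>V. \<Sum>v'\<in>V. cnj (wt v) * wt v' *
            (if cf v - Z = cf v' - Z then gk Z w (cf v) (cf v' \<inter> Z) else 0))"
    by (rule finner_kernel[OF fin fV Z cf B \<psi>])
  also have "\<dots> = 0"
  proof (intro sum.neutral ballI)
    fix v v' assume v: "v \<in> V" "v' \<in> V"
    show "cnj (wt v) * wt v' * (if cf v - Z = cf v' - Z then gk Z w (cf v) (cf v' \<inter> Z) else 0) = 0"
    proof (cases "cf v - Z = cf v' - Z")
      case True
      have fv: "finite (cf v)" using cf v(1) fin finite_subset by blast
      have "gk Z w (cf v) (cf v' \<inter> Z) = 0"
      proof (rule ccontr)
        assume "gk Z w (cf v) (cf v' \<inter> Z) \<noteq> 0"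
        from gk_parity[OF fX XZ fv this] have "even (card (cf v \<inter> X) + card (cf v' \<inter> Z \<inter> X) + nX X w)" .
        moreover have "cf v' \<inter> Z \<inter> X = cf v' \<inter> X" using XZ by auto
        ultimately have "even (card (cf v \<inter> X) + card (cf v' \<inter> X) + nX X w)" by simp
        then show False using key[OF v True] w(2) by simp
      qed
      then show ?thesis using True by simp
    qed simp
  qed
  finally show ?thesis .
qed

lemma finner_lin: "finner \<Lambda> \<phi> (\<lambda>S. \<Sum>i\<in>I. c i * f i S) = (\<Sum>i\<in>I. c i * finner \<Lambda> \<phi> (f i))"
  unfolding finner_def by (simp add: sum_distrib_left sum.swap[of _ I] mult_ac)

lemma nX_append: "nX X (u @ v) = nX X u + nX X v"
  by (simp add: nX_def)

lemma nX_all: "word_in X u \<Longrightarrow> nX X u = length u"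
  by (simp add: nX_def word_in_def)

lemma nX_none: "word_in Y v \<Longrightarrow> X \<inter> Y = {} \<Longrightarrow> nX X v = 0"
  unfolding nX_def word_in_def by (auto simp: filter_empty_conv)

lemma word_in_append: "word_in Z u \<Longrightarrow> word_in Z v \<Longrightarrow> word_in Z (u @ v)"
  by (auto simp: word_in_def)

lemma word_in_mono: "word_in X u \<Longrightarrow> X \<subseteq> Z \<Longrightarrow> word_in Z u"
  by (auto simp: word_in_def)


lemma rate_bound:
  fixes lam :: complex and M :: nat and Dr :: real
  assumes "lam \<noteq> 0" "Dr \<le> 6 * real M"
  defines "s \<equiv> sqrt (1 + 4 * (cmod lam)\<^sup>2)"
  defines "r \<equiv> (s - 1) / (s + 1)"
  shows "r ^ M \<le> exp (- corr_rate lam * Dr / 2)" "0 < r"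
proof -
  have t: "(cmod lam)\<^sup>2 > 0" using assms(1) by simp
  have s1: "s > 1" unfolding s_def using t by simp
  show r0: "0 < r" unfolding r_def using s1 by simp
  have r1: "r < 1" unfolding r_def using s1 by simp
  have cr: "corr_rate lam = - (1/3) * ln r"
  proof -
    have "sqrt (4 * (cmod lam)\<^sup>2 + 1) = s" unfolding s_def by (simp add: add.commute)
    then have "corr_rate lam = (1/3) * ln ((s + 1) / (s - 1))" unfolding corr_rate_def by simp
    also have "(s + 1) / (s - 1) = inverse r" unfolding r_def by simp
    finally show ?thesis by (simp add: ln_inverse)
  qed
  have lr: "ln r < 0" using r0 r1 by simp
  have eq1: "- corr_rate lam * Dr / 2 = ln r * (Dr / 6)" unfolding cr by (simp add: field_simps)
  have le1: "real M * ln r \<le> ln r * (Dr / 6)"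
  proof -
    have "Dr / 6 \<le> real M" using assms(2) by simp
    then have "ln r * real M \<le> ln r * (Dr / 6)" using lr by (intro mult_left_mono_neg) auto
    then show ?thesis by (simp add: mult.commute)
  qed
  have "r ^ M = exp (real M * ln r)" using r0 by (simp add: exp_of_nat_mult)
  also have "\<dots> \<le> exp (ln r * (Dr / 6))" using le1 by simp
  also have "\<dots> = exp (- corr_rate lam * Dr / 2)" unfolding eq1 ..
  finally show "r ^ M \<le> exp (- corr_rate lam * Dr / 2)" .
qed

lemma main_even:
  fixes a b p1 p2 q1 q2 D :: int and R :: "tile list" and lam :: complex
  assumes rt: "root_tiling a b R" and lam: "lam \<noteq> 0"
    and iv: "a \<le> p1" "p1 \<le> p2" "p2 + 20 \<le> q1" "q1 \<le> q2" "q2 \<le> b" and Dd: "D \<le> q1 - p2"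
    and k: "lkern {p1..p2} AP KP" "lkern {q1..q2} AQ KQ"
  shows "cmod (omega lam a b R (AP \<circ> AQ) - omega lam a b R AP * omega lam a b R AQ)
           \<le> 8 * opnorm {a..b} AP * opnorm {a..b} AQ * exp (- corr_rate lam * real_of_int (D - 20) / 2)"
proof -
  define m where "m = 2 * nat ((q1 - p2 - 5) div 6)"
  have ap2: "a \<le> p2" and qb: "q1 \<le> b" using iv by auto
  have "\<exists>RL B RR. R = RL @ B @ RR \<and> RL \<noteq> [] \<and> RR \<noteq> [] \<and> p2 < a + tl_len RL \<and>
            a + tl_len RL + tl_len B \<le> q1 \<and> (B = [Void] \<or> B = replicate m Mono)"
    unfolding m_def by (rule block_exists[OF rt ap2 iv(3) qb])
  then obtain RL B RR where R: "R = RL @ B @ RR" and ne: "RL \<noteq> []" "RR \<noteq> []"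
    and pos: "p2 < a + tl_len RL" "a + tl_len RL + tl_len B \<le> q1"
    and BB: "B = [Void] \<or> B = replicate m Mono"
    by blast
  have bb: "b = a + tl_len (RL @ B @ RR) - 1" using root_tlen[OF rt] R by simp
  have dd: "6 * ((q1 - p2 - 5) div 6) \<ge> q1 - p2 - 10"
    using pos_mod_bound[of 6 "q1 - p2 - 5"] div_mult_mod_eq[of "q1 - p2 - 5" 6] by linarith
  have d0: "2 \<le> (q1 - p2 - 5) div 6" using iv by simp
  have m4: "m \<ge> 4" unfolding m_def using d0 by simp
  have Bne: "B \<noteq> []" using BB m4 by auto
  have BM: "set B \<subseteq> {Mono, Void}" using BB by auto
  have PQ: "{p1..p2} \<subseteq> {a..<a + tl_len RL}" "{q1..q2} \<subseteq> {a + tl_len RL + tl_len B..b}"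
    using iv pos by auto
  have o1: "0 \<le> opnorm {a..b} AP" by (rule opnorm_nonneg[OF k(1)]) (use iv in auto)
  have o2: "0 \<le> opnorm {a..b} AQ" by (rule opnorm_nonneg[OF k(2)]) (use iv in auto)
  have E0: "0 \<le> 8 * opnorm {a..b} AP * opnorm {a..b} AQ * exp (- corr_rate lam * real_of_int (D - 20) / 2)"
    using o1 o2 by simp
  note oc = omega_cov[OF ne(1) Bne ne(2) BM PQ[unfolded bb] k, folded bb R]
  from BB show ?thesis
  proof
    assume BV: "B = [Void]"
    have "cmod (omega lam a b R (AP \<circ> AQ) - omega lam a b R AP * omega lam a b R AQ)
        \<le> opnorm {a..b} AP * opnorm {a..b} AQ * 0"
      by (rule oc) (simp_all add: BV prB_Void[unfolded prB_def])
    then show ?thesis using E0 by simp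
  next
    assume BMo: "B = replicate m Mono"
    define j where "j = m - 2"
    have mj: "m = Suc (Suc j)" unfolding j_def using m4 by simp
    have ej: "even j" unfolding j_def m_def by simp
    define s where "s = sqrt (1 + 4 * (cmod lam)\<^sup>2)"
    define r where "r = (s - 1) / (s + 1)"
    note mb = mono_block_bound[OF lam ej, folded s_def r_def mj BMo[symmetric]]
    have Dr: "real_of_int (D - 20) \<le> 6 * real (Suc j)"
    proof -
      have "3 * int m \<ge> q1 - p2 - 10" unfolding m_def using dd d0 by simp
      then have "int (Suc j) * 6 \<ge> 2 * (q1 - p2) - 26" using mj by simp
      then have h1: "6 * int (Suc j) \<ge> 2 * (q1 - p2) - 26" by (simp only: mult.commute)
      have "D - 20 \<le> 6 * int (Suc j)" using h1 Dd iv(3) by presburger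
      then show ?thesis by (metis of_int_le_iff of_int_of_nat_eq of_int_mult of_int_numeral)
    qed
    note rb = rate_bound[OF lam Dr, folded s_def r_def]
    have "cmod (omega lam a b R (AP \<circ> AQ) - omega lam a b R AP * omega lam a b R AQ)
        \<le> opnorm {a..b} AP * opnorm {a..b} AQ * (4 * r ^ Suc j)"
      by (rule oc) (use mb rb(2) BMo in \<open>simp_all add: prB_def\<close>)
    also have "\<dots> \<le> opnorm {a..b} AP * opnorm {a..b} AQ * (8 * exp (- corr_rate lam * real_of_int (D - 20) / 2))"
    proof (rule mult_left_mono)
      have "r ^ Suc j \<le> exp (- corr_rate lam * real_of_int (D - 20) / 2)" by (rule rb(1))
      moreover have "0 \<le> r ^ Suc j" using rb(2) by simp
      ultimately show "4 * r ^ Suc j \<le> 8 * exp (- corr_rate lam * real_of_int (D - 20) / 2)" by simp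
    qed (use o1 o2 in simp)
    finally show ?thesis by (simp add: mult_ac)
  qed
qed


lemma sep_cases:
  fixes x1 x2 y1 y2 :: int
  assumes "x1 \<le> x2" "y1 \<le> y2" "set_dist {x1..x2} {y1..y2} \<ge> 20"
  shows "(x2 + 20 \<le> y1 \<and> set_dist {x1..x2} {y1..y2} \<le> y1 - x2) \<or> (y2 + 20 \<le> x1 \<and> set_dist {x1..x2} {y1..y2} \<le> x1 - y2)"
proof -
  let ?SD = "{\<bar>x - y\<bar> | x y. x \<in> {x1..x2} \<and> y \<in> {y1..y2}}"
  have "?SD = (\<lambda>p. \<bar>fst p - snd p\<bar>) ` ({x1..x2} \<times> {y1..y2})" by force
  then have fin: "finite ?SD" by simp
  have le: "set_dist {x1..x2} {y1..y2} \<le> \<bar>x - y\<bar>" if "x \<in> {x1..x2}" "y \<in> {y1..y2}" for x y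
    unfolding set_dist_def using that by (intro Min_le[OF fin]) blast
  show ?thesis
  proof (cases "x2 < y1")
    case True
    have "set_dist {x1..x2} {y1..y2} \<le> \<bar>x2 - y1\<bar>" using le assms by simp
    then show ?thesis using True assms(3) by auto
  next
    case False
    show ?thesis
    proof (cases "y2 < x1")
      case True
      have "set_dist {x1..x2} {y1..y2} \<le> \<bar>x1 - y2\<bar>" using le assms by simp
      then show ?thesis using True assms(3) by auto
    next
      case False
      define z where "z = max x1 y1"
      have "z \<in> {x1..x2}" "z \<in> {y1..y2}" using \<open>\<not> x2 < y1\<close> False assms(1,2) unfolding z_def by auto
      then have "set_dist {x1..x2} {y1..y2} \<le> 0" using le[of z z] by simp
      then show ?thesis using assms(3) by simp
    qed
  qed
qed

lemma omega_comm:
  assumes "lkern X A1 K1" "lkern Y A2 K2" "X \<inter> Y = {}" "finite X" "finite Y"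
  shows "omega lam a b R (A1 \<circ> A2) = omega lam a b R (A2 \<circ> A1)"
proof -
  have "finner {a..b} \<psi> ((A1 \<circ> A2) \<psi>) = finner {a..b} \<psi> ((A2 \<circ> A1) \<psi>)" for \<psi>
    unfolding finner_def
  proof (intro sum.cong refl)
    fix S assume "S \<in> Pow {a..b}"
    then have fS: "finite S" using finite_subset by auto
    have d: "Y \<inter> X = {}" using assms(3) by auto
    show "cnj (\<psi> S) * (A1 \<circ> A2) \<psi> S = cnj (\<psi> S) * (A2 \<circ> A1) \<psi> S"
      unfolding lkern_comp[OF assms(1,2,3,4,5) fS] lkern_comp[OF assms(2,1) d assms(5,4) fS]
      by (simp add: Un_commute mult_ac)
  qed
  then show ?thesis unfolding omega_def by simp
qed

lemma key_sep:
  fixes a b p1 p2 q1 q2 :: int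
  assumes rt: "root_tiling a b R" and iv: "a \<le> p1" "p1 \<le> p2" "p2 + 20 \<le> q1" "q1 \<le> q2" "q2 \<le> b"
    and ss: "ss \<in> VS R" "ss' \<in> VS R"
    and eq: "cfgS a R ss - ({p1..p2} \<union> {q1..q2}) = cfgS a R ss' - ({p1..p2} \<union> {q1..q2})"
  shows "card (cfgS a R ss \<inter> {p1..p2}) = card (cfgS a R ss' \<inter> {p1..p2}) \<and>
         card (cfgS a R ss \<inter> {q1..q2}) = card (cfgS a R ss' \<inter> {q1..q2})"
proof -
  have ap2: "a \<le> p2" and qb: "q1 \<le> b" using iv by auto
  obtain RL B RR where R: "R = RL @ B @ RR" and ne: "RL \<noteq> []" "RR \<noteq> []"
    and pos: "p2 < a + tl_len RL" "a + tl_len RL + tl_len B \<le> q1"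
    and BB: "B = [Void] \<or> B = replicate (2 * nat ((q1 - p2 - 5) div 6)) Mono"
    using block_exists[OF rt ap2 iv(3) qb] by blast
  have d0: "2 \<le> (q1 - p2 - 5) div 6" using iv by simp
  have Bne: "B \<noteq> []" using BB d0 by auto
  have BM: "set B \<subseteq> {Mono, Void}" using BB by auto
  have PQ: "{p1..p2} \<subseteq> {..<a + tl_len RL}" "{q1..q2} \<subseteq> {a + tl_len RL + tl_len B..}" using pos by auto
  show ?thesis using card_local[OF ne(1) Bne ne(2) BM PQ, folded R, OF ss eq] .
qed

lemma odd_part:
  fixes x1 x2 y1 y2 :: int
  assumes rt: "root_tiling a b R" and XL: "{x1..x2} \<subseteq> {a..b}" and YL: "{y1..y2} \<subseteq> {a..b}"
    and disj: "{x1..x2} \<inter> {y1..y2} = {}"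
    and key: "\<And>ss ss'. ss \<in> VS R \<Longrightarrow> ss' \<in> VS R \<Longrightarrow>
       cfgS a R ss - ({x1..x2} \<union> {y1..y2}) = cfgS a R ss' - ({x1..x2} \<union> {y1..y2}) \<Longrightarrow>
       card (cfgS a R ss \<inter> {x1..x2}) = card (cfgS a R ss' \<inter> {x1..x2})"
    and A1: "A1 \<in> obs_odd {x1..x2}" and A2: "A2 \<in> obs_alg {y1..y2}"
  shows "omega lam a b R (A1 \<circ> A2) = 0 \<and> omega lam a b R A1 = 0"
proof -
  let ?X = "{x1..x2}" and ?Y = "{y1..y2}" and ?\<Lambda> = "{a..b}"
  let ?\<psi> = "vmd_state lam a R"
  from A1 obtain n :: nat and c :: "nat \<Rightarrow> complex" and ws where
    ws: "\<forall>i<n. word_in ?X (ws i) \<and> odd (length (ws i))"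
    and A1e: "A1 = (\<lambda>\<psi> S. \<Sum>i<n. c i * op_word (ws i) \<psi> S)"
    unfolding obs_odd_def op_span_def by auto
  from A2 obtain n' :: nat and d :: "nat \<Rightarrow> complex" and vs where
    vs: "\<forall>j<n'. word_in ?Y (vs j)"
    and A2e: "A2 = (\<lambda>\<psi> S. \<Sum>j<n'. d j * op_word (vs j) \<psi> S)"
    unfolding obs_alg_def op_span_def by auto
  have fin: "finite ?\<Lambda>" by simp
  have fVS: "finite (VS R)" using finite_VV by (simp add: VS_vLR VV_def[symmetric])
  have cfL: "\<forall>v\<in>VS R. cfgS a R v \<subseteq> ?\<Lambda>"
    using cfgS_range root_tlen[OF rt] unfolding VS_def by fastforce
  note \<psi>eq = vmd_state_eq[of lam a R]
  have z1: "finner ?\<Lambda> ?\<psi> (op_word (ws i) ?\<psi>) = 0" if "i < n" for i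
  proof (rule word_zero[OF fin XL subset_refl _ _ fVS cfL \<psi>eq])
    show "word_in ?X (ws i)" using ws that by auto
    show "odd (nX ?X (ws i))" using ws that nX_all by auto
    fix v v' assume v: "v \<in> VS R" "v' \<in> VS R" and e: "cfgS a R v - ?X = cfgS a R v' - ?X"
    show "card (cfgS a R v \<inter> ?X) = card (cfgS a R v' \<inter> ?X)"
      by (rule card_Int_eq[OF finite_cfgS finite_cfgS _ e]) (simp add: card_total[OF v(1)] card_total[OF v(2)])
  qed
  have XYL: "?X \<union> ?Y \<subseteq> ?\<Lambda>" using XL YL by auto
  have z2: "finner ?\<Lambda> ?\<psi> (op_word (ws i @ vs j) ?\<psi>) = 0" if "i < n" "j < n'" for i j
  proof (rule word_zero[OF fin XYL Un_upper1 _ _ fVS cfL \<psi>eq])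
    have wX: "word_in ?X (ws i)" and wY: "word_in ?Y (vs j)" using ws vs that by auto
    show "word_in (?X \<union> ?Y) (ws i @ vs j)"
      by (rule word_in_append[OF word_in_mono[OF wX] word_in_mono[OF wY]]) auto
    have "nX ?X (ws i @ vs j) = length (ws i)"
      using ws vs that nX_all nX_none[OF _ disj] by (simp add: nX_append)
    then show "odd (nX ?X (ws i @ vs j))" using ws that by simp
    fix v v' assume "v \<in> VS R" "v' \<in> VS R" "cfgS a R v - (?X \<union> ?Y) = cfgS a R v' - (?X \<union> ?Y)"
    then show "card (cfgS a R v \<inter> ?X) = card (cfgS a R v' \<inter> ?X)" by (rule key)
  qed
  have "finner ?\<Lambda> ?\<psi> (A1 ?\<psi>) = (\<Sum>i<n. c i * finner ?\<Lambda> ?\<psi> (op_word (ws i) ?\<psi>))"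
    unfolding A1e by (rule finner_lin)
  also have "\<dots> = 0" using z1 by simp
  finally have o1: "finner ?\<Lambda> ?\<psi> (A1 ?\<psi>) = 0" .
  have fX: "finite ?X" by simp
  have comp: "(A1 \<circ> A2) ?\<psi> = (\<lambda>S. \<Sum>i<n. c i * (\<lambda>S. \<Sum>j<n'. d j * op_word (ws i @ vs j) ?\<psi> S) S)"
  proof (rule ext)
    fix S
    have "(A1 \<circ> A2) ?\<psi> S = (\<Sum>i<n. c i * op_word (ws i) (\<lambda>S. \<Sum>j<n'. d j * op_word (vs j) ?\<psi> S) S)"
      unfolding A1e A2e by simp
    also have "\<dots> = (\<Sum>i<n. c i * (\<Sum>j<n'. d j * op_word (ws i @ vs j) ?\<psi> S))"
    proof (rule sum.cong[OF refl])
      fix i assume "i \<in> {..<n}"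
      then have wi: "word_in ?X (ws i)" using ws by auto
      show "c i * op_word (ws i) (\<lambda>S. \<Sum>j<n'. d j * op_word (vs j) ?\<psi> S) S = c i * (\<Sum>j<n'. d j * op_word (ws i @ vs j) ?\<psi> S)"
        using op_word_sum[OF fX wi, where c=d and J="{..<n'}" and f="\<lambda>j. op_word (vs j) ?\<psi>" and S=S]
        by (simp add: op_word_append)
    qed
    finally show "(A1 \<circ> A2) ?\<psi> S = (\<lambda>S. \<Sum>i<n. c i * (\<lambda>S. \<Sum>j<n'. d j * op_word (ws i @ vs j) ?\<psi> S) S) S" by simp
  qed
  have "finner ?\<Lambda> ?\<psi> ((A1 \<circ> A2) ?\<psi>) = (\<Sum>i<n. c i * finner ?\<Lambda> ?\<psi> (\<lambda>S. \<Sum>j<n'. d j * op_word (ws i @ vs j) ?\<psi> S))"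
    unfolding comp by (rule finner_lin)
  also have "\<dots> = (\<Sum>i<n. c i * (\<Sum>j<n'. d j * finner ?\<Lambda> ?\<psi> (op_word (ws i @ vs j) ?\<psi>)))"
    by (simp only: finner_lin)
  also have "\<dots> = 0" using z2 by simp
  finally have o2: "finner ?\<Lambda> ?\<psi> ((A1 \<circ> A2) ?\<psi>) = 0" .
  show ?thesis unfolding omega_def o1 o2 by simp
qed


theorem theorem1p5:
  fixes a b x1 x2 y1 y2 :: int and R :: "tile list" and lam :: complex and \<kappa> :: real
  assumes "x1 \<le> x2" and "y1 \<le> y2"
    and "{x1..x2} \<subseteq> {a..b}" and "{y1..y2} \<subseteq> {a..b}"
    and "set_dist {x1..x2} {y1..y2} \<ge> 20"
    and "root_tiling a b R"
    and "lam \<noteq> 0" and "\<kappa> > 0"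
  shows "(\<forall>A1\<in>obs_even {x1..x2}. \<forall>A2\<in>obs_even {y1..y2}.
            cmod (omega lam a b R (A1 \<circ> A2) - omega lam a b R A1 * omega lam a b R A2)
            \<le> 8 * opnorm {a..b} A1 * opnorm {a..b} A2
                * exp (- corr_rate lam * real_of_int (set_dist {x1..x2} {y1..y2} - 20) / 2))
       \<and> (\<forall>A1\<in>obs_odd {x1..x2}. \<forall>A2\<in>obs_alg {y1..y2}.
            omega lam a b R (A1 \<circ> A2) = 0 \<and> omega lam a b R A1 = 0)"
proof -
  note x12 = assms(1) and y12 = assms(2) and XL = assms(3) and YL = assms(4) and rt = assms(6) and lam = assms(7)
  have xab: "a \<le> x1" "x2 \<le> b" using XL x12 by auto
  have yab: "a \<le> y1" "y2 \<le> b" using YL y12 by auto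
  define D where "D = set_dist {x1..x2} {y1..y2}"
  have sc: "(x2 + 20 \<le> y1 \<and> D \<le> y1 - x2) \<or> (y2 + 20 \<le> x1 \<and> D \<le> x1 - y2)"
    unfolding D_def by (rule sep_cases[OF x12 y12 assms(5)])
  have disj: "{x1..x2} \<inter> {y1..y2} = {}" using sc by auto
  show ?thesis
  proof (intro conjI ballI)
    fix A1 A2 assume A1: "A1 \<in> obs_even {x1..x2}" and A2: "A2 \<in> obs_even {y1..y2}"
    obtain K1 where k1: "lkern {x1..x2} A1 K1" using even_lkern[OF A1] by blast
    obtain K2 where k2: "lkern {y1..y2} A2 K2" using even_lkern[OF A2] by blast
    from sc show "cmod (omega lam a b R (A1 \<circ> A2) - omega lam a b R A1 * omega lam a b R A2)
            \<le> 8 * opnorm {a..b} A1 * opnorm {a..b} A2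
                * exp (- corr_rate lam * real_of_int (set_dist {x1..x2} {y1..y2} - 20) / 2)"
    proof
      assume c: "x2 + 20 \<le> y1 \<and> D \<le> y1 - x2"
      show ?thesis
        using main_even[OF rt lam xab(1) x12 _ y12 yab(2) _ k1 k2] c unfolding D_def by blast
    next
      assume c: "y2 + 20 \<le> x1 \<and> D \<le> x1 - y2"
      have "cmod (omega lam a b R (A2 \<circ> A1) - omega lam a b R A2 * omega lam a b R A1)
            \<le> 8 * opnorm {a..b} A2 * opnorm {a..b} A1 * exp (- corr_rate lam * real_of_int (D - 20) / 2)"
        using main_even[OF rt lam yab(1) y12 _ x12 xab(2) _ k2 k1] c by blast
      moreover have "omega lam a b R (A1 \<circ> A2) = omega lam a b R (A2 \<circ> A1)"
        by (rule omega_comm[OF k1 k2 disj]) auto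
      ultimately show ?thesis unfolding D_def by (simp add: mult_ac)
    qed
  next
    fix A1 A2 assume A1: "A1 \<in> obs_odd {x1..x2}" and A2: "A2 \<in> obs_alg {y1..y2}"
    have key: "card (cfgS a R ss \<inter> {x1..x2}) = card (cfgS a R ss' \<inter> {x1..x2})"
      if ss: "ss \<in> VS R" "ss' \<in> VS R"
        and e: "cfgS a R ss - ({x1..x2} \<union> {y1..y2}) = cfgS a R ss' - ({x1..x2} \<union> {y1..y2})" for ss ss'
      using sc
    proof
      assume c: "x2 + 20 \<le> y1 \<and> D \<le> y1 - x2"
      show ?thesis using key_sep[OF rt xab(1) x12 _ y12 yab(2) ss e] c by blast
    next
      assume c: "y2 + 20 \<le> x1 \<and> D \<le> x1 - y2"
      have e': "cfgS a R ss - ({y1..y2} \<union> {x1..x2}) = cfgS a R ss' - ({y1..y2} \<union> {x1..x2})"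
        using e by (simp add: Un_commute)
      show ?thesis using key_sep[OF rt yab(1) y12 _ x12 xab(2) ss e'] c by blast
    qed
    have "omega lam a b R (A1 \<circ> A2) = 0 \<and> omega lam a b R A1 = 0"
      by (rule odd_part[OF rt XL YL disj key A1 A2])
    then show "omega lam a b R (A1 \<circ> A2) = 0" "omega lam a b R A1 = 0" by auto
  qed
qed


end
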